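(* Let $A\subset\mathbb{Z}^d$ be finite with $\mathbb{Z}$-linear span $\mathbb{Z}^d$ and $f=\bigoplus_{i\in A}p_i\odot w^i$ a tropical polynomial with support $A$. The weight classes of $f$ are finitely many relatively open polyhedral cells, and they refine the polyhedral structure of $\mathcal{T}(f)$ given by the relative interiors of the dual cells $\sigma^*$ of the marked subdivision $\Pi_p$ (each weight class is contained in the relative interior of a single $\sigma^*$). If $C$ is one of these weight classes, then either all points of $C$ are singular points of $\mathcal{T}(f)$ or none of them is.
   Context: $\mathbb{K}$ is an algebraically closed field of characteristic $0$ with a rank-one non-archimedean valuation $val$ whose residue field has characteristic $0$. Tropical operations $\oplus=\min$, $\odot=+$; $f(w)=\min_{i\in A}(p_i+\langle i,w\rangle)$, all $p_i\in\mathbb{R}$; $\mathcal{T}(f)$ is where this minimum is attained at least twice. A point $q\in\mathcal{T}(f)$ is singular if there exist $F=\sum_{i\in A}a_ix^i$ over $\mathbb{K}$ with $val(a_i)=p_i$ and $b\in(\mathbb{K}^* )^d$ with $val(b)=q$, $F(b)=0$ and all $\partial F/\partial x_j(b)=0$. For $q\in\mathbb{R}^d$, $\sigma_q=\{i\in A:p_i+\langle i,q\rangle=f(q)\}$; the marked cells of $\Pi_p$ are the sets $\sigma_q$, and the dual cell $\sigma^*$ is the closure of $\{q:\sigma_q=\sigma\}$ (with relative interior $\{q:\sigma_q=\sigma\}$). $\langle S\rangle$ denotes the affine span. Flag of $f$ at $q\in\mathcal{T}(f)$: $F_0(q)=\sigma_q$, and inductively, while $\dim\langle F_\ell(q)\rangle<d$,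 $F_{\ell+1}(q)=F_\ell(q)\cup M_\ell$ where $M_\ell$ is the set of $i\in A\setminus\langle F_\ell(q)\rangle$ at which $\min_{i\in A\setminus\langle F_\ell(q)\rangle}(p_i+\langle i,q\rangle)$ is attained; the flag $\mathcal{F}(q)=(F_0(q)\subsetneq F_1(q)\subsetneq\dots\subsetneq F_r(q))$ stops when $\dim\langle F_r(q)\rangle=d$. The weight class of $q$ is $\{q'\in\mathcal{T}(f):\mathcal{F}(q')=\mathcal{F}(q)\}$. *)

theory Defs
  imports "HOL-Analysis.Analysis" "HOL-Computational_Algebra.Polynomial"
begin

text \<open>Exponent vectors live in int^'n (d = CARD('n)); points of R^d in real^'n.\<close>

definition rv :: "int^'n \<Rightarrow> real^'n" where
  "rv i = (\<chi> j. real_of_int (i $ j))"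

definition Z_span :: "(int^'n) set \<Rightarrow> (int^'n) set" where
  "Z_span A = {z. \<exists>c :: int^'n \<Rightarrow> int. z = (\<Sum>i\<in>A. c i *s i)}"

definition trop_val :: "(int^'n) set \<Rightarrow> (int^'n \<Rightarrow> real) \<Rightarrow> real^'n \<Rightarrow> real" where
  "trop_val A p w = Min ((\<lambda>i. p i + rv i \<bullet> w) ` A)"

definition sigma :: "(int^'n) set \<Rightarrow> (int^'n \<Rightarrow> real) \<Rightarrow> real^'n \<Rightarrow> (int^'n) set" where
  "sigma A p q = {i \<in> A. p i + rv i \<bullet> q = trop_val A p q}"

definition trop_hypersurface :: "(int^'n) set \<Rightarrow> (int^'n \<Rightarrow> real) \<Rightarrow> (real^'n) set" where
  "trop_hypersurface A p = {q. card (sigma A p q) \<ge> 2}"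

definition dual_cell :: "(int^'n) set \<Rightarrow> (int^'n \<Rightarrow> real) \<Rightarrow> (int^'n) set \<Rightarrow> (real^'n) set" where
  "dual_cell A p \<sigma> = closure {q. sigma A p q = \<sigma>}"

definition argmin_set :: "(int^'n \<Rightarrow> real) \<Rightarrow> real^'n \<Rightarrow> (int^'n) set \<Rightarrow> (int^'n) set" where
  "argmin_set p q S = {i \<in> S. \<forall>k\<in>S. p i + rv i \<bullet> q \<le> p k + rv k \<bullet> q}"

text \<open>The flag as a sequence F_0, F_1, ...; once dim <F_l> = d it stays constant.\<close>
primrec flag_seq :: "(int^'n) set \<Rightarrow> (int^'n \<Rightarrow> real) \<Rightarrow> real^'n \<Rightarrow> nat \<Rightarrow> (int^'n) set" where
  "flag_seq A p q 0 = sigma A p q"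
| "flag_seq A p q (Suc l) =
     (if aff_dim (rv ` flag_seq A p q l) < int CARD('n)
      then flag_seq A p q l \<union>
           argmin_set p q (A - {i. rv i \<in> affine hull (rv ` flag_seq A p q l)})
      else flag_seq A p q l)"

definition weight_class :: "(int^'n) set \<Rightarrow> (int^'n \<Rightarrow> real) \<Rightarrow> real^'n \<Rightarrow> (real^'n) set" where
  "weight_class A p q = {q' \<in> trop_hypersurface A p. flag_seq A p q' = flag_seq A p q}"

definition weight_classes :: "(int^'n) set \<Rightarrow> (int^'n \<Rightarrow> real) \<Rightarrow> (real^'n) set set" where
  "weight_classes A p = weight_class A p ` trop_hypersurface A p"

text \<open>Valued field: val defined on nonzero elements, rank one (real values),
  non-archimedean, value group all of R, residue field of characteristic 0.\<close>
definition nonarch_valuation :: "('k::field_char_0 \<Rightarrow> real) \<Rightarrow> bool" where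
  "nonarch_valuation val \<longleftrightarrow>
     (\<forall>x y. x \<noteq> 0 \<and> y \<noteq> 0 \<longrightarrow> val (x * y) = val x + val y) \<and>
     (\<forall>x y. x \<noteq> 0 \<and> y \<noteq> 0 \<and> x + y \<noteq> 0 \<longrightarrow> val (x + y) \<ge> min (val x) (val y)) \<and>
     (\<forall>r. \<exists>x. x \<noteq> 0 \<and> val x = r) \<and>
     (\<forall>n::nat. n > 0 \<longrightarrow> val (of_nat n) = 0)"

definition alg_closed :: "'k::field itself \<Rightarrow> bool" where
  "alg_closed _ \<longleftrightarrow> (\<forall>P :: 'k poly. degree P \<ge> 1 \<longrightarrow> (\<exists>x. poly P x = 0))"

definition mono_eval :: "'k::field ^'n \<Rightarrow> int^'n \<Rightarrow> 'k" where
  "mono_eval b i = (\<Prod>j\<in>UNIV. (b $ j) powi (i $ j))"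

definition singular_point ::
  "('k::field_char_0 \<Rightarrow> real) \<Rightarrow> (int^'n) set \<Rightarrow> (int^'n \<Rightarrow> real) \<Rightarrow> real^'n \<Rightarrow> bool" where
  "singular_point val A p q \<longleftrightarrow> q \<in> trop_hypersurface A p \<and>
     (\<exists>(a :: int^'n \<Rightarrow> 'k) (b :: 'k^'n).
        (\<forall>i\<in>A. a i \<noteq> 0 \<and> val (a i) = p i) \<and>
        (\<forall>j. b $ j \<noteq> 0 \<and> val (b $ j) = q $ j) \<and>
        (\<Sum>i\<in>A. a i * mono_eval b i) = 0 \<and>
        (\<forall>j. (\<Sum>i\<in>A. a i * of_int (i $ j) * mono_eval b (i - axis j 1)) = 0))"

end

theory Submission
  imports Defs
begin

section \<open>Valuation lemmas\<close>

context
  fixes val :: "'k::field_char_0 \<Rightarrow> real"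
  assumes nv: "nonarch_valuation val"
begin

lemma nv_mult: "x \<noteq> 0 \<Longrightarrow> y \<noteq> 0 \<Longrightarrow> val (x*y) = val x + val y"
  using nv unfolding nonarch_valuation_def by blast

lemma nv_add: "x \<noteq> 0 \<Longrightarrow> y \<noteq> 0 \<Longrightarrow> x + y \<noteq> 0 \<Longrightarrow> val (x+y) \<ge> min (val x) (val y)"
  using nv unfolding nonarch_valuation_def by blast

lemma nv_surj: "\<exists>x. x \<noteq> 0 \<and> val x = r"
  using nv unfolding nonarch_valuation_def by blast

lemma nv_nat: "n > 0 \<Longrightarrow> val (of_nat n) = 0"
  using nv unfolding nonarch_valuation_def by blast

lemma nv_one: "val 1 = 0"
  using nv_nat[of 1] by simp

lemma nv_inverse: "x \<noteq> 0 \<Longrightarrow> val (inverse x) = - val x"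
  using nv_mult[of x "inverse x"] nv_one by simp

lemma nv_m1: "val (-1) = 0"
  using nv_mult[of "-1" "-1"] nv_one by simp

lemma nv_minus: "x \<noteq> 0 \<Longrightarrow> val (-x) = val x"
  using nv_mult[of "-1" x] nv_m1 by simp

lemma nv_of_int: "z \<noteq> 0 \<Longrightarrow> val (of_int z) = 0"
proof (cases "z > 0")
  case True
  then have "(of_int z :: 'k) = of_nat (nat z)" by simp
  then show ?thesis using nv_nat[of "nat z"] True by simp
next
  case False
  assume "z \<noteq> 0"
  with False have "(of_int z :: 'k) = - of_nat (nat (-z))" by simp
  moreover have "(of_nat (nat (-z)) :: 'k) \<noteq> 0" using False \<open>z \<noteq> 0\<close> by simp
  ultimately show ?thesis using nv_nat[of "nat (-z)"] nv_minus False \<open>z \<noteq> 0\<close> by simp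
qed

lemma nv_divide: "x \<noteq> 0 \<Longrightarrow> y \<noteq> 0 \<Longrightarrow> val (x / y) = val x - val y"
  by (simp add: divide_inverse nv_mult nv_inverse)

lemma nv_of_rat: "r \<noteq> 0 \<Longrightarrow> val (of_rat r) = 0"
proof -
  assume r: "r \<noteq> 0"
  obtain a b where ab: "r = Fract a b" "b > 0" by (cases r) auto
  have "a \<noteq> 0" using r ab(1) by (auto simp: rat_number_collapse)
  have "(of_rat r :: 'k) = of_int a / of_int b" using ab by (simp add: of_rat_rat)
  then show ?thesis using nv_divide[of "of_int a" "of_int b"] nv_of_int \<open>a \<noteq> 0\<close> ab by simp
qed

lemma nv_power: "x \<noteq> 0 \<Longrightarrow> val (x ^ n) = real n * val x"
  by (induction n) (auto simp: nv_one nv_mult algebra_simps)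

lemma nv_powi: "x \<noteq> 0 \<Longrightarrow> val (x powi z) = of_int z * val x"
  by (auto simp: power_int_def nv_power nv_inverse)

lemma nv_prod: "finite I \<Longrightarrow> (\<forall>i\<in>I. f i \<noteq> 0) \<Longrightarrow> val (prod f I) = (\<Sum>i\<in>I. val (f i))"
  by (induction I rule: finite_induct) (auto simp: nv_one nv_mult)

lemma nv_sum_gt:
  assumes "finite I" "\<forall>i\<in>I. f i = 0 \<or> val (f i) > a"
  shows "sum f I = 0 \<or> val (sum f I) > a"
  using assms
proof (induction I rule: finite_induct)
  case empty then show ?case by simp
next
  case (insert x F)
  then have h1: "f x = 0 \<or> val (f x) > a" and h2: "sum f F = 0 \<or> val (sum f F) > a" by auto
  have eq: "sum f (insert x F) = f x + sum f F" using insert by simp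
  show ?case
  proof (cases "f x = 0 \<or> sum f F = 0 \<or> f x + sum f F = 0")
    case True then show ?thesis using h1 h2 eq by auto
  next
    case False
    then have "val (f x + sum f F) \<ge> min (val (f x)) (val (sum f F))" by (intro nv_add) auto
    then show ?thesis using h1 h2 False eq by auto
  qed
qed

lemma nv_dom:
  assumes "x \<noteq> 0" "val x = a" "y = 0 \<or> val y > a"
  shows "x + y \<noteq> 0 \<and> val (x + y) = a"
proof (cases "y = 0")
  case True then show ?thesis using assms by simp
next
  case False
  then have vy: "val y > a" using assms by simp
  have ne: "x + y \<noteq> 0"
  proof
    assume "x + y = 0"
    then have "x = - y" by (simp add: eq_neg_iff_add_eq_0)
    then show False using vy assms nv_minus[OF False] by simp
  qed
  have ge: "val (x + y) \<ge> a" using nv_add[OF assms(1) False ne] vy assms by simp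
  have "val x \<ge> min (val (x+y)) (val (-y))"
    using nv_add[of "x+y" "-y"] ne False assms(1) by simp
  then have "val (x+y) \<le> a" using vy assms nv_minus[OF False] by (auto simp: min_def split: if_splits)
  then show ?thesis using ne ge by simp
qed

end


section \<open>Singular points via coefficient relations\<close>

definition krel :: "(int^'n) set \<Rightarrow> (int^'n \<Rightarrow> 'k::field) \<Rightarrow> bool" where
  "krel A c \<longleftrightarrow> (\<Sum>k\<in>A. c k) = 0 \<and> (\<forall>j. (\<Sum>k\<in>A. c k * of_int (k$j)) = 0)"

definition wv :: "(int^'n \<Rightarrow> real) \<Rightarrow> real^'n \<Rightarrow> int^'n \<Rightarrow> real" where
  "wv p q k = p k + rv k \<bullet> q"

lemma mono_eval_nz: "(\<forall>j. b$j \<noteq> 0) \<Longrightarrow> mono_eval b i \<noteq> 0"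
  unfolding mono_eval_def by (auto simp: prod_zero_iff)

lemma mono_eval_shift:
  assumes "\<forall>j. b$j \<noteq> 0"
  shows "mono_eval b i = b$j * mono_eval b (i - axis j 1)"
proof -
  have "mono_eval b i = (b$j) powi (i$j) * (\<Prod>j'\<in>UNIV-{j}. (b$j') powi (i$j'))"
    unfolding mono_eval_def by (simp add: prod.remove)
  moreover have "mono_eval b (i - axis j 1) = (b$j) powi (i$j - 1) * (\<Prod>j'\<in>UNIV-{j}. (b$j') powi (i$j'))"
  proof -
    have "mono_eval b (i - axis j 1) = (b$j) powi ((i - axis j 1)$j) * (\<Prod>j'\<in>UNIV-{j}. (b$j') powi ((i - axis j 1)$j'))"
      unfolding mono_eval_def by (rule prod.remove) simp_all
    also have "(\<Prod>j'\<in>UNIV-{j}. (b$j') powi ((i - axis j 1)$j')) = (\<Prod>j'\<in>UNIV-{j}. (b$j') powi (i$j'))"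
      by (rule prod.cong) (auto simp: axis_def)
    finally show ?thesis by (simp add: axis_def)
  qed
  moreover have "(b$j) powi (i$j) = b$j * (b$j) powi (i$j - 1)"
    using power_int_add_1'[of "b$j" "i$j - 1"] assms by simp
  ultimately show ?thesis by simp
qed

context
  fixes val :: "'k::field_char_0 \<Rightarrow> real"
  assumes nv: "nonarch_valuation val"
begin

lemma val_mono_eval:
  assumes "\<forall>j. b$j \<noteq> 0 \<and> val (b$j) = q$j"
  shows "val (mono_eval b i) = rv i \<bullet> q"
proof -
  have "val (mono_eval b i) = (\<Sum>j\<in>UNIV. val ((b$j) powi (i$j)))"
    unfolding mono_eval_def using assms by (intro nv_prod[OF nv]) auto
  also have "\<dots> = (\<Sum>j\<in>UNIV. real_of_int (i$j) * q$j)"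
    using assms nv_powi[OF nv] by simp
  also have "\<dots> = rv i \<bullet> q" by (simp add: inner_vec_def rv_def)
  finally show ?thesis .
qed

lemma singular_iff:
  "singular_point val A p q \<longleftrightarrow> q \<in> trop_hypersurface A p \<and>
     (\<exists>c::int^'n \<Rightarrow> 'k. (\<forall>k\<in>A. c k \<noteq> 0 \<and> val (c k) = wv p q k) \<and> krel A c)"
proof
  assume "singular_point val A p q"
  then obtain a :: "int^'n \<Rightarrow> 'k" and b :: "'k^'n" where
    T: "q \<in> trop_hypersurface A p" and
    a: "\<forall>i\<in>A. a i \<noteq> 0 \<and> val (a i) = p i" and
    b: "\<forall>j. b $ j \<noteq> 0 \<and> val (b $ j) = q $ j" and
    s0: "(\<Sum>i\<in>A. a i * mono_eval b i) = 0" and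
    s1: "\<forall>j. (\<Sum>i\<in>A. a i * of_int (i $ j) * mono_eval b (i - axis j 1)) = 0"
    unfolding singular_point_def by blast
  define c where "c i = a i * mono_eval b i" for i
  have me: "mono_eval b i \<noteq> 0" for i using b mono_eval_nz by blast
  have "\<forall>k\<in>A. c k \<noteq> 0 \<and> val (c k) = wv p q k"
  proof
    fix k assume k: "k \<in> A"
    then have "a k \<noteq> 0" "val (a k) = p k" using a by auto
    then show "c k \<noteq> 0 \<and> val (c k) = wv p q k"
      using me[of k] val_mono_eval[OF b, of k] nv_mult[OF nv, of "a k" "mono_eval b k"]
      by (simp add: c_def wv_def)
  qed
  moreover have "krel A c"
    unfolding krel_def
  proof (intro conjI allI)
    show "(\<Sum>k\<in>A. c k) = 0" using s0 by (simp add: c_def)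
    fix j
    have "(\<Sum>k\<in>A. c k * of_int (k$j)) = (\<Sum>k\<in>A. b$j * (a k * of_int (k $ j) * mono_eval b (k - axis j 1)))"
    proof (rule sum.cong)
      fix k
      have "mono_eval b k = b$j * mono_eval b (k - axis j 1)" using mono_eval_shift[of b k j] b by blast
      then show "c k * of_int (k$j) = b$j * (a k * of_int (k $ j) * mono_eval b (k - axis j 1))"
        unfolding c_def by (simp only: mult_ac)
    qed simp
    also have "\<dots> = b$j * (\<Sum>k\<in>A. a k * of_int (k $ j) * mono_eval b (k - axis j 1))" by (rule sum_distrib_left[symmetric])
    also have "\<dots> = 0" using s1 by simp
    finally show "(\<Sum>k\<in>A. c k * of_int (k$j)) = 0" .
  qed
  ultimately show "q \<in> trop_hypersurface A p \<and>
     (\<exists>c::int^'n \<Rightarrow> 'k. (\<forall>k\<in>A. c k \<noteq> 0 \<and> val (c k) = wv p q k) \<and> krel A c)"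
    using T by blast
next
  assume "q \<in> trop_hypersurface A p \<and>
     (\<exists>c::int^'n \<Rightarrow> 'k. (\<forall>k\<in>A. c k \<noteq> 0 \<and> val (c k) = wv p q k) \<and> krel A c)"
  then obtain c :: "int^'n \<Rightarrow> 'k" where T: "q \<in> trop_hypersurface A p"
    and c: "\<forall>k\<in>A. c k \<noteq> 0 \<and> val (c k) = wv p q k" and kr: "krel A c" by blast
  define b :: "'k^'n" where "b = (\<chi> j. SOME x. x \<noteq> 0 \<and> val x = q$j)"
  have b: "\<forall>j. b $ j \<noteq> 0 \<and> val (b $ j) = q $ j"
    unfolding b_def using someI_ex[OF nv_surj[OF nv]] by auto
  define a where "a i = c i / mono_eval b i" for i
  have me: "mono_eval b i \<noteq> 0" for i using b mono_eval_nz by blast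
  have ac: "a i * mono_eval b i = c i" for i using me by (simp add: a_def)
  have "\<forall>i\<in>A. a i \<noteq> 0 \<and> val (a i) = p i"
  proof
    fix i assume i: "i \<in> A"
    then have "c i \<noteq> 0" "val (c i) = wv p q i" using c by auto
    then show "a i \<noteq> 0 \<and> val (a i) = p i"
      using me[of i] val_mono_eval[OF b, of i] nv_divide[OF nv, of "c i" "mono_eval b i"]
      by (simp add: a_def wv_def)
  qed
  moreover have "(\<Sum>i\<in>A. a i * mono_eval b i) = 0" using kr by (simp add: ac krel_def)
  moreover have "\<forall>j. (\<Sum>i\<in>A. a i * of_int (i $ j) * mono_eval b (i - axis j 1)) = 0"
  proof
    fix j
    have bj: "b$j \<noteq> 0" using b by auto
    have "(\<Sum>i\<in>A. a i * of_int (i $ j) * mono_eval b (i - axis j 1))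
        = (\<Sum>i\<in>A. c i * of_int (i$j) / b$j)"
    proof (rule sum.cong)
      fix i
      have "c i = a i * (b$j * mono_eval b (i - axis j 1))"
        using ac[of i] mono_eval_shift[of b i j] b by simp
      then show "a i * of_int (i $ j) * mono_eval b (i - axis j 1) = c i * of_int (i$j) / b$j"
        using bj by (simp add: field_simps)
    qed simp
    also have "\<dots> = (\<Sum>i\<in>A. c i * of_int (i$j)) / b$j" by (simp add: sum_divide_distrib)
    also have "\<dots> = 0" using kr by (simp add: krel_def)
    finally show "(\<Sum>i\<in>A. a i * of_int (i $ j) * mono_eval b (i - axis j 1)) = 0" .
  qed
  ultimately show "singular_point val A p q"
    unfolding singular_point_def using T b by blast
qed

end



section \<open>Flags\<close>

definition Hs :: "(int^'n) set \<Rightarrow> (int^'n) set" where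
  "Hs F = {i. rv i \<in> affine hull (rv ` F)}"

fun Fl :: "(int^'n) set \<Rightarrow> (int^'n \<Rightarrow> real) \<Rightarrow> real^'n \<Rightarrow> nat \<Rightarrow> (int^'n) set" where
  "Fl A p q 0 = {}"
| "Fl A p q (Suc l) = Fl A p q l \<union> argmin_set p q (A - Hs (Fl A p q l))"

lemma argmin_sub: "argmin_set p q S \<subseteq> S"
  by (auto simp: argmin_set_def)

lemma argmin_le: "i \<in> argmin_set p q S \<Longrightarrow> k \<in> S \<Longrightarrow> wv p q i \<le> wv p q k"
  by (auto simp: argmin_set_def wv_def)

lemma argmin_eqv: "i \<in> argmin_set p q S \<Longrightarrow> k \<in> argmin_set p q S \<Longrightarrow> wv p q i = wv p q k"
  by (meson antisym argmin_le argmin_sub subsetD)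

lemma argmin_iff: "i \<in> argmin_set p q S \<longleftrightarrow> i \<in> S \<and> (\<forall>k\<in>S. wv p q i \<le> wv p q k)"
  by (auto simp: argmin_set_def wv_def)

lemma argmin_nonempty:
  assumes "finite S" "S \<noteq> {}"
  shows "argmin_set p q S \<noteq> {}"
proof -
  have "Min (wv p q ` S) \<in> wv p q ` S" using Min_in[of "wv p q ` S"] assms by auto
  then obtain i where "i \<in> S" "wv p q i = Min (wv p q ` S)" by auto
  then have "i \<in> argmin_set p q S" using assms by (auto simp: argmin_iff)
  then show ?thesis by auto
qed

lemma argmin_empty [simp]: "argmin_set p q {} = {}"
  by (auto simp: argmin_set_def)

lemma argmin_eq_iff:
  assumes "M \<noteq> {}" "M \<subseteq> S"
  shows "argmin_set p q S = M \<longleftrightarrow>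
    (\<forall>i\<in>M. \<forall>k\<in>M. wv p q i = wv p q k) \<and> (\<forall>i\<in>M. \<forall>k\<in>S-M. wv p q i < wv p q k)"
proof
  assume h: "argmin_set p q S = M"
  have 1: "\<forall>i\<in>M. \<forall>k\<in>M. wv p q i = wv p q k" using h argmin_eqv by blast
  have "\<forall>i\<in>M. \<forall>k\<in>S-M. wv p q i < wv p q k"
  proof (intro ballI)
    fix i k assume i: "i \<in> M" and k: "k \<in> S - M"
    have le: "wv p q i \<le> wv p q k" using h i k argmin_le by blast
    show "wv p q i < wv p q k"
    proof (rule ccontr)
      assume "\<not> ?thesis"
      then have "wv p q k = wv p q i" using le by simp
      then have "k \<in> argmin_set p q S" using h i k argmin_le[of i p q S] by (auto simp: argmin_iff)
      then show False using h k by auto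
    qed
  qed
  then show "(\<forall>i\<in>M. \<forall>k\<in>M. wv p q i = wv p q k) \<and> (\<forall>i\<in>M. \<forall>k\<in>S-M. wv p q i < wv p q k)"
    using 1 by blast
next
  assume h: "(\<forall>i\<in>M. \<forall>k\<in>M. wv p q i = wv p q k) \<and> (\<forall>i\<in>M. \<forall>k\<in>S-M. wv p q i < wv p q k)"
  show "argmin_set p q S = M"
  proof
    show "argmin_set p q S \<subseteq> M"
    proof
      fix i assume i: "i \<in> argmin_set p q S"
      show "i \<in> M"
      proof (rule ccontr)
        assume "i \<notin> M"
        obtain m where "m \<in> M" using assms by auto
        then have "wv p q m < wv p q i" using h i \<open>i \<notin> M\<close> argmin_sub by blast
        moreover have "wv p q i \<le> wv p q m" using i \<open>m \<in> M\<close> assms argmin_le by blast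
        ultimately show False by simp
      qed
    qed
    show "M \<subseteq> argmin_set p q S"
    proof
      fix i assume i: "i \<in> M"
      have "\<forall>k\<in>S. wv p q i \<le> wv p q k"
        using h i by (metis DiffI order.order_iff_strict order.refl)
      then show "i \<in> argmin_set p q S" using i assms by (auto simp: argmin_iff)
    qed
  qed
qed

lemma Hs_mono: "F \<subseteq> G \<Longrightarrow> Hs F \<subseteq> Hs G"
proof
  fix x assume "F \<subseteq> G" "x \<in> Hs F"
  then have "affine hull (rv ` F) \<subseteq> affine hull (rv ` G)" by (intro hull_mono image_mono)
  then show "x \<in> Hs G" using \<open>x \<in> Hs F\<close> by (auto simp: Hs_def)
qed

lemma Hs_sub: "F \<subseteq> Hs F"
  unfolding Hs_def by (auto intro: hull_inc)

lemma Hs_empty [simp]: "Hs {} = {}"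
  unfolding Hs_def by simp

lemma Fl_sub: "Fl A p q l \<subseteq> A"
proof (induction l)
  case (Suc l) then show ?case using argmin_sub[of p q "A - Hs (Fl A p q l)"] by auto
qed simp

lemma Fl_Suc_mono: "Fl A p q l \<subseteq> Fl A p q (Suc l)"
  by simp

lemma Fl_mono: "l \<le> l' \<Longrightarrow> Fl A p q l \<subseteq> Fl A p q l'"
  by (induction l' rule: dec_induct) (auto)

lemma Fl_new: "i \<in> Fl A p q (Suc l) - Fl A p q l \<Longrightarrow> i \<in> argmin_set p q (A - Hs (Fl A p q l))"
  by auto

lemma argmin_disj: "argmin_set p q (A - Hs F) \<inter> F = {}"
  using argmin_sub Hs_sub by blast

lemma sigma_argmin:
  assumes "finite A"
  shows "sigma A p q = argmin_set p q A"
proof -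
  have "p i + rv i \<bullet> q = trop_val A p q \<longleftrightarrow> (\<forall>k\<in>A. p i + rv i \<bullet> q \<le> p k + rv k \<bullet> q)" if "i \<in> A" for i
  proof -
    have fin: "finite ((\<lambda>i. p i + rv i \<bullet> q) ` A)" using assms by simp
    have "trop_val A p q \<in> (\<lambda>i. p i + rv i \<bullet> q) ` A" unfolding trop_val_def
      using Min_in[OF fin] that by auto
    moreover have "\<forall>k\<in>A. trop_val A p q \<le> p k + rv k \<bullet> q" unfolding trop_val_def
      using Min_le[OF fin] by auto
    ultimately show ?thesis using that by (force intro: antisym)
  qed
  then show ?thesis unfolding sigma_def argmin_set_def by auto
qed

lemma flag_Fl:
  fixes A :: "(int^'n) set"
  assumes "finite A"
  shows "flag_seq A p q l = Fl A p q (Suc l)"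
proof (induction l)
  case 0 then show ?case using sigma_argmin[OF assms] by simp
next
  case (Suc l)
  define F where "F = Fl A p q (Suc l)"
  have st: "flag_seq A p q (Suc l) = (if aff_dim (rv ` F) < int CARD('n)
      then F \<union> argmin_set p q (A - Hs F) else F)"
    using Suc by (simp only: flag_seq.simps F_def Hs_def)
  have fs: "Fl A p q (Suc (Suc l)) = F \<union> argmin_set p q (A - Hs F)"
    by (simp only: Fl.simps(2) F_def)
  show ?case
  proof (cases "aff_dim (rv ` F) < int CARD('n)")
    case True
    then show ?thesis using st fs by simp
  next
    case False
    then have "aff_dim (rv ` F) = int DIM(real^'n)"
      using aff_dim_le_DIM[of "rv ` F"] by simp
    then have "affine hull (rv ` F) = UNIV" using aff_dim_eq_full by blast
    then have "Hs F = UNIV" by (simp add: Hs_def)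
    then show ?thesis using st fs False by simp
  qed
qed

lemma Fl_det:
  assumes "\<forall>S\<subseteq>A. argmin_set p q S = argmin_set p q' S"
  shows "Fl A p q l = Fl A p q' l"
proof (induction l)
  case (Suc l)
  have "A - Hs (Fl A p q l) \<subseteq> A" by blast
  then have "argmin_set p q (A - Hs (Fl A p q l)) = argmin_set p q' (A - Hs (Fl A p q l))"
    using assms by blast
  then show ?case using Suc by simp
qed simp

lemma factA:
  assumes "j \<in> Fl A p q l" "k \<in> A" "k \<notin> Hs (Fl A p q l)"
  shows "wv p q j < wv p q k"
  using assms
proof (induction l arbitrary: j)
  case 0 then show ?case by simp
next
  case (Suc l)
  have kn: "k \<notin> Hs (Fl A p q l)" using Suc.prems(3) Hs_mono[OF Fl_Suc_mono] by blast
  show ?case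
  proof (cases "j \<in> Fl A p q l")
    case True then show ?thesis using Suc.IH kn Suc.prems by blast
  next
    case False
    then have j: "j \<in> argmin_set p q (A - Hs (Fl A p q l))" using Suc.prems by auto
    have "k \<in> A - Hs (Fl A p q l)" using kn Suc.prems by auto
    then have le: "wv p q j \<le> wv p q k" using j argmin_le by blast
    have "k \<notin> argmin_set p q (A - Hs (Fl A p q l))"
      using Suc.prems(3) Hs_sub[of "Fl A p q (Suc l)"] by auto
    then have "wv p q j \<noteq> wv p q k"
      using j \<open>k \<in> A - Hs (Fl A p q l)\<close> by (auto simp: argmin_iff)
    then show ?thesis using le by simp
  qed
qed

lemma factB:
  assumes "j \<in> Fl A p q (Suc L)" "k \<in> A" "k \<notin> Hs (Fl A p q L)" "k \<notin> Fl A p q (Suc L)"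
  shows "wv p q j < wv p q k"
proof (cases "j \<in> Fl A p q L")
  case True show ?thesis using factA[OF True assms(2) assms(3)] .
next
  case False
  then have j: "j \<in> argmin_set p q (A - Hs (Fl A p q L))" using assms by auto
  have k: "k \<in> A - Hs (Fl A p q L)" using assms by auto
  then have le: "wv p q j \<le> wv p q k" using j argmin_le by blast
  have "k \<notin> argmin_set p q (A - Hs (Fl A p q L))" using assms(4) by auto
  then have "wv p q j \<noteq> wv p q k" using j k by (auto simp: argmin_iff)
  then show ?thesis using le by simp
qed

lemma Fl_card:
  assumes "finite A" "\<forall>m<l. \<not> A \<subseteq> Hs (Fl A p q m)"
  shows "card (Fl A p q l) \<ge> l"
  using assms(2)
proof (induction l)
  case 0 then show ?case by simp
next
  case (Suc l)
  have "\<forall>m<l. \<not> A \<subseteq> Hs (Fl A p q m)" using Suc.prems less_SucI by blast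
  then have cl: "card (Fl A p q l) \<ge> l" by (rule Suc.IH)
  have "\<not> A \<subseteq> Hs (Fl A p q l)" using Suc.prems lessI by blast
  then have "A - Hs (Fl A p q l) \<noteq> {}" by blast
  moreover have "finite (A - Hs (Fl A p q l))" using assms(1) by (rule finite_Diff)
  ultimately have "argmin_set p q (A - Hs (Fl A p q l)) \<noteq> {}"
    using argmin_nonempty by blast
  then obtain x where x: "x \<in> argmin_set p q (A - Hs (Fl A p q l))" by blast
  then have xn: "x \<notin> Fl A p q l" using argmin_disj by blast
  have xi: "x \<in> Fl A p q (Suc l)" using x by (simp only: Fl.simps UnI2)
  have fin1: "finite (Fl A p q (Suc l))" by (rule finite_subset[OF Fl_sub assms(1)])
  have fin0: "finite (Fl A p q l)" by (rule finite_subset[OF Fl_sub assms(1)])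
  have "insert x (Fl A p q l) \<subseteq> Fl A p q (Suc l)" using xi Fl_Suc_mono by blast
  then have "card (insert x (Fl A p q l)) \<le> card (Fl A p q (Suc l))"
    by (rule card_mono[OF fin1])
  moreover have "card (insert x (Fl A p q l)) = Suc (card (Fl A p q l))"
    using card_insert_disjoint[OF fin0 xn] .
  ultimately show ?case using cl by linarith
qed

lemma Fl_stab:
  assumes "finite A"
  shows "\<exists>N. A \<subseteq> Hs (Fl A p q N)"
proof (rule ccontr)
  assume "\<not> ?thesis"
  then have "\<forall>m<Suc (card A). \<not> A \<subseteq> Hs (Fl A p q m)" by blast
  then have "card (Fl A p q (Suc (card A))) \<ge> Suc (card A)"
    by (rule Fl_card[OF assms])
  moreover have "card (Fl A p q (Suc (card A))) \<le> card A"
    by (rule card_mono[OF assms Fl_sub])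
  ultimately show False by simp
qed



section \<open>Rational linear algebra\<close>

definition qv :: "int^'n \<Rightarrow> rat^'n" where "qv k = (\<chi> j. of_int (k$j))"

definition dotq :: "rat^'n \<Rightarrow> rat^'n \<Rightarrow> rat" where "dotq \<phi> x = (\<Sum>j\<in>UNIV. \<phi>$j * x$j)"

lemma rat_sep:
  fixes u :: "rat^'n"
  assumes "u \<notin> vec.span S"
  shows "\<exists>\<phi>. (\<forall>s\<in>S. dotq \<phi> s = 0) \<and> dotq \<phi> u \<noteq> 0"
proof -
  obtain B where B: "B \<subseteq> S" "vec.independent B" "S \<subseteq> vec.span B"
    by (rule vec.maximal_independent_subset)
  have uB: "u \<notin> vec.span B" using assms vec.span_mono[OF B(1)] by blast
  have uB': "u \<notin> B" using uB vec.span_base by blast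
  have ind: "vec.independent (insert u B)" by (rule vec.independent_insertI[OF uB B(2)])
  obtain j0 :: 'n where True by simp
  obtain g where g: "Vector_Spaces.linear (*s) (*s) g"
    and gv: "\<forall>x\<in>insert u B. g x = (if x = u then axis j0 (1::rat) else 0)"
    using vec.linear_independent_extend[OF ind, of "\<lambda>x. if x = u then axis j0 1 else 0"] by blast
  have gB: "g x = 0" if "x \<in> vec.span B" for x
  proof (rule vec.span_induct[OF that vec.linear_subspace_kernel[OF g]])
    fix y assume "y \<in> B"
    then show "g y = 0" using gv uB' by auto
  qed
  have gu: "g u = axis j0 1" using gv by simp
  define \<phi> where "\<phi> = (\<chi> j. (g (axis j 1))$j0)"
  have dot: "dotq \<phi> x = (g x)$j0" for x
  proof -
    have "g x = g (\<Sum>i\<in>UNIV. x$i *s axis i 1)" by (simp only: basis_expansion)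
    also have "\<dots> = (\<Sum>i\<in>UNIV. g (x$i *s axis i 1))" by (rule vec.linear_sum[OF g])
    also have "\<dots> = (\<Sum>i\<in>UNIV. x$i *s g (axis i 1))" by (simp only: vec.linear_scale[OF g])
    finally have "(g x)$j0 = (\<Sum>i\<in>UNIV. x$i * (g (axis i 1))$j0)" by (simp add: sum_component)
    then show ?thesis by (simp add: dotq_def \<phi>_def mult.commute)
  qed
  have "\<forall>s\<in>S. dotq \<phi> s = 0" using B(3) gB dot by auto
  moreover have "dotq \<phi> u \<noteq> 0" using dot gu by (simp add: axis_def)
  ultimately show ?thesis by blast
qed

lemma span_combo:
  fixes f0 :: "int^'n"
  assumes "finite P" "x \<in> vec.span ((\<lambda>v. qv v - qv f0) ` P)"
  shows "\<exists>a. x = (\<Sum>v\<in>P. a v *s (qv v - qv f0))"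
proof -
  let ?Q = "{x. \<exists>a. x = (\<Sum>v\<in>P. a v *s (qv v - qv f0))}"
  have sub: "vec.subspace ?Q"
    unfolding vec.subspace_def
  proof (intro conjI ballI allI)
    show "0 \<in> ?Q" by (rule CollectI, rule exI[of _ "\<lambda>_. 0"]) simp
    fix x y assume "x \<in> ?Q" "y \<in> ?Q"
    then obtain a b where ab: "x = (\<Sum>v\<in>P. a v *s (qv v - qv f0))" "y = (\<Sum>v\<in>P. b v *s (qv v - qv f0))" by blast
    have "x + y = (\<Sum>v\<in>P. (a v + b v) *s (qv v - qv f0))"
      by (simp only: ab vector_sadd_rdistrib sum.distrib)
    then show "x + y \<in> ?Q" by (intro CollectI exI)
  next
    fix c x assume "x \<in> ?Q"
    then obtain a where "x = (\<Sum>v\<in>P. a v *s (qv v - qv f0))" by blast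
    then have "c *s x = (\<Sum>v\<in>P. (c * a v) *s (qv v - qv f0))"
      by (simp add: vec.scale_sum_right)
    then show "c *s x \<in> ?Q" by (intro CollectI exI)
  qed
  show ?thesis
  proof (rule vec.span_induct[OF assms(2) sub])
    fix y assume "y \<in> (\<lambda>v. qv v - qv f0) ` P"
    then obtain w where w: "w \<in> P" "y = qv w - qv f0" by blast
    have "(\<Sum>v\<in>P. (if v = w then 1 else 0) *s (qv v - qv f0)) = (\<Sum>v\<in>P. if v = w then qv w - qv f0 else 0)"
      by (rule sum.cong) auto
    also have "\<dots> = qv w - qv f0" using w assms(1) by (simp add: sum.delta)
    finally have "y = (\<Sum>v\<in>P. (if v = w then 1 else 0) *s (qv v - qv f0))" using w by simp
    then show "\<exists>a. y = (\<Sum>v\<in>P. a v *s (qv v - qv f0))" by (intro exI)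
  qed
qed


lemma rat_aff_sep:
  fixes P :: "(int^'n) set"
  assumes "finite P" "f0 \<in> P"
    and "\<not>(\<exists>\<mu>::int^'n \<Rightarrow> rat. sum \<mu> P = 1 \<and> (\<forall>j. (\<Sum>v\<in>P. \<mu> v * of_int (v$j)) = of_int (k$j)))"
  shows "\<exists>\<phi>. (\<forall>v\<in>P. dotq \<phi> (qv v - qv f0) = 0) \<and> dotq \<phi> (qv k - qv f0) \<noteq> 0"
proof -
  have "qv k - qv f0 \<notin> vec.span ((\<lambda>v. qv v - qv f0) ` P)"
  proof
    assume "qv k - qv f0 \<in> vec.span ((\<lambda>v. qv v - qv f0) ` P)"
    then obtain a where a: "qv k - qv f0 = (\<Sum>v\<in>P. a v *s (qv v - qv f0))"
      using span_combo[OF assms(1)] by blast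
    define \<mu> where "\<mu> v = a v + (if v = f0 then 1 - sum a P else 0)" for v
    have s1: "sum \<mu> P = 1"
      unfolding \<mu>_def using assms(1,2) by (simp add: sum.distrib sum.delta)
    have "\<forall>j. (\<Sum>v\<in>P. \<mu> v * of_int (v$j)) = of_int (k$j)"
    proof
      fix j
      from a have "(qv k - qv f0)$j = (\<Sum>v\<in>P. a v *s (qv v - qv f0))$j" by simp
      then have e: "of_int (k$j) - of_int (f0$j) = (\<Sum>v\<in>P. a v * (of_int (v$j) - of_int (f0$j)))"
        by (simp add: qv_def sum_component right_diff_distrib)
      also have "\<dots> = (\<Sum>v\<in>P. a v * of_int (v$j)) - (\<Sum>v\<in>P. a v * of_int (f0$j))"
        by (simp only: right_diff_distrib sum_subtractf)
      also have "(\<Sum>v\<in>P. a v * of_int (f0$j)) = sum a P * of_int (f0$j)"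
        by (simp add: sum_distrib_right)
      finally have e2: "(\<Sum>v\<in>P. a v * of_int (v$j)) = of_int (k$j) - of_int (f0$j) + sum a P * of_int (f0$j)"
        by simp
      have "(\<Sum>v\<in>P. \<mu> v * of_int (v$j)) = (\<Sum>v\<in>P. a v * of_int (v$j) + (if v = f0 then (1 - sum a P) * of_int (f0$j) else 0))"
        unfolding \<mu>_def by (rule sum.cong) (auto simp: algebra_simps)
      also have "\<dots> = (\<Sum>v\<in>P. a v * of_int (v$j)) + (1 - sum a P) * of_int (f0$j)"
        using assms(1,2) by (simp add: sum.distrib sum.delta)
      also have "\<dots> = of_int (k$j)" using e2 by (simp add: algebra_simps)
      finally show "(\<Sum>v\<in>P. \<mu> v * of_int (v$j)) = of_int (k$j)" .
    qed
    then show False using assms(3) s1 by blast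
  qed
  from rat_sep[OF this] obtain \<phi> where
    "\<forall>s\<in>(\<lambda>v. qv v - qv f0) ` P. dotq \<phi> s = 0" "dotq \<phi> (qv k - qv f0) \<noteq> 0" by blast
  then show ?thesis by auto
qed

definition Phi :: "rat^'n \<Rightarrow> real^'n \<Rightarrow> real" where
  "Phi \<phi> y = (\<Sum>j\<in>UNIV. real_of_rat (\<phi>$j) * y$j)"

lemma Phi_rv: "Phi \<phi> (rv k) - Phi \<phi> (rv f0) = real_of_rat (dotq \<phi> (qv k - qv f0))"
  by (simp add: Phi_def dotq_def rv_def qv_def of_rat_sum of_rat_mult of_rat_diff
      sum_subtractf[symmetric] algebra_simps)

lemma Phi_lin: "Phi \<phi> (\<Sum>y\<in>S. u y *\<^sub>R y) = (\<Sum>y\<in>S. u y * Phi \<phi> y)"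
proof -
  have "Phi \<phi> (\<Sum>y\<in>S. u y *\<^sub>R y) = (\<Sum>j\<in>UNIV. \<Sum>y\<in>S. real_of_rat (\<phi>$j) * (u y * y$j))"
    by (simp add: Phi_def sum_component sum_distrib_left)
  also have "\<dots> = (\<Sum>y\<in>S. \<Sum>j\<in>UNIV. u y * (real_of_rat (\<phi>$j) * y$j))"
    by (subst sum.swap) (simp add: algebra_simps)
  also have "\<dots> = (\<Sum>y\<in>S. u y * Phi \<phi> y)"
    by (simp add: Phi_def sum_distrib_left)
  finally show ?thesis .
qed

lemma aff_vanish:
  assumes "finite P" "\<forall>v\<in>P. dotq \<phi> (qv v - qv f0) = 0" "rv k \<in> affine hull (rv ` P)"
  shows "dotq \<phi> (qv k - qv f0) = 0"
proof -
  have fin: "finite (rv ` P)" using assms(1) by simp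
  obtain u where u: "sum u (rv ` P) = 1" "(\<Sum>y\<in>rv ` P. u y *\<^sub>R y) = rv k"
    using assms(3) affine_hull_finite[OF fin] by auto
  have "Phi \<phi> (rv k) - Phi \<phi> (rv f0) = (\<Sum>y\<in>rv ` P. u y * Phi \<phi> y) - (\<Sum>y\<in>rv ` P. u y) * Phi \<phi> (rv f0)"
    using u Phi_lin[of \<phi> u "rv ` P"] by simp
  also have "\<dots> = (\<Sum>y\<in>rv ` P. u y * (Phi \<phi> y - Phi \<phi> (rv f0)))"
    by (simp add: sum_distrib_right sum_subtractf right_diff_distrib)
  also have "\<dots> = 0"
  proof (rule sum.neutral, rule ballI)
    fix y assume "y \<in> rv ` P"
    then obtain v where v: "v \<in> P" "y = rv v" by blast
    then have "Phi \<phi> y - Phi \<phi> (rv f0) = 0" using Phi_rv[of \<phi> v f0] assms(2) by simp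
    then show "u y * (Phi \<phi> y - Phi \<phi> (rv f0)) = 0" by simp
  qed
  finally show ?thesis using Phi_rv[of \<phi> k f0] by simp
qed

lemma rv_inj: "inj rv"
  by (rule injI) (simp add: rv_def vec_eq_iff)

lemma rat_combo_hull:
  fixes \<mu> :: "int^'n \<Rightarrow> rat"
  assumes "finite P" "sum \<mu> P = 1" "\<forall>j. (\<Sum>v\<in>P. \<mu> v * of_int (v$j)) = of_int (k$j)"
  shows "rv k \<in> affine hull (rv ` P)"
proof -
  have fin: "finite (rv ` P)" using assms(1) by simp
  have inj: "inj_on rv P" using rv_inj by (rule inj_on_subset) simp
  define u where "u y = real_of_rat (\<mu> (inv_into P rv y))" for y
  have uv: "u (rv v) = real_of_rat (\<mu> v)" if "v \<in> P" for v
    using that inj by (simp add: u_def)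
  have "sum u (rv ` P) = (\<Sum>v\<in>P. u (rv v))" by (rule sum.reindex[OF inj, unfolded comp_def])
  also have "\<dots> = (\<Sum>v\<in>P. real_of_rat (\<mu> v))" by (rule sum.cong) (simp_all add: uv)
  also have "\<dots> = 1" using assms(2) by (simp add: of_rat_sum[symmetric])
  finally have s1: "sum u (rv ` P) = 1" .
  have "(\<Sum>y\<in>rv ` P. u y *\<^sub>R y) = (\<Sum>v\<in>P. u (rv v) *\<^sub>R rv v)"
    by (rule sum.reindex[OF inj, unfolded comp_def])
  also have "\<dots> = (\<Sum>v\<in>P. real_of_rat (\<mu> v) *\<^sub>R rv v)" by (rule sum.cong) (simp_all add: uv)
  also have "\<dots> = rv k"
  proof (subst vec_eq_iff, rule allI)
    fix j
    have "(\<Sum>v\<in>P. real_of_rat (\<mu> v) *\<^sub>R rv v) $ j = (\<Sum>v\<in>P. real_of_rat (\<mu> v * of_int (v$j)))"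
      by (simp add: sum_component rv_def of_rat_mult)
    also have "\<dots> = real_of_rat (\<Sum>v\<in>P. \<mu> v * of_int (v$j))" by (simp add: of_rat_sum)
    also have "\<dots> = rv k $ j" using assms(3) by (simp add: rv_def)
    finally show "(\<Sum>v\<in>P. real_of_rat (\<mu> v) *\<^sub>R rv v) $ j = rv k $ j" .
  qed
  finally show ?thesis using s1 affine_hull_finite[OF fin] by auto
qed

lemma real_to_rat:
  fixes P :: "(int^'n) set"
  assumes "finite P" "P \<noteq> {}" "rv k \<in> affine hull (rv ` P)"
  shows "\<exists>\<mu>::int^'n \<Rightarrow> rat. sum \<mu> P = 1 \<and> (\<forall>j. (\<Sum>v\<in>P. \<mu> v * of_int (v$j)) = of_int (k$j))"
proof (rule ccontr)
  assume h: "\<not> ?thesis"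
  obtain f0 where f0: "f0 \<in> P" using assms(2) by blast
  obtain \<phi> where "\<forall>v\<in>P. dotq \<phi> (qv v - qv f0) = 0" "dotq \<phi> (qv k - qv f0) \<noteq> 0"
    using rat_aff_sep[OF assms(1) f0 h] by blast
  then show False using aff_vanish[OF assms(1) _ assms(3)] by blast
qed

lemma not_hull_sep:
  fixes P :: "(int^'n) set"
  assumes "finite P" "f0 \<in> P" "rv k \<notin> affine hull (rv ` P)"
  shows "\<exists>\<phi>. (\<forall>v\<in>P. dotq \<phi> (qv v - qv f0) = 0) \<and> dotq \<phi> (qv k - qv f0) \<noteq> 0"
proof (rule rat_aff_sep[OF assms(1,2)])
  show "\<not>(\<exists>\<mu>::int^'n \<Rightarrow> rat. sum \<mu> P = 1 \<and> (\<forall>j. (\<Sum>v\<in>P. \<mu> v * of_int (v$j)) = of_int (k$j)))"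
    using rat_combo_hull[OF assms(1)] assms(3) by blast
qed



definition rrel :: "(int^'n) set \<Rightarrow> (int^'n \<Rightarrow> rat) \<Rightarrow> bool" where
  "rrel A \<rho> \<longleftrightarrow> sum \<rho> A = 0 \<and> (\<forall>j. (\<Sum>k\<in>A. \<rho> k * of_int (k$j)) = 0)"

lemma rrel_comb:
  assumes "\<forall>i\<in>I. rrel A (r i)"
  shows "rrel A (\<lambda>k. \<Sum>i\<in>I. t i * r i k)"
  unfolding rrel_def
proof (intro conjI allI)
  have "(\<Sum>k\<in>A. \<Sum>i\<in>I. t i * r i k) = (\<Sum>i\<in>I. t i * (\<Sum>k\<in>A. r i k))"
    by (subst sum.swap) (simp add: sum_distrib_left)
  also have "\<dots> = 0" using assms by (simp add: rrel_def)
  finally show "(\<Sum>k\<in>A. \<Sum>i\<in>I. t i * r i k) = 0" .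
  fix j
  have "(\<Sum>k\<in>A. (\<Sum>i\<in>I. t i * r i k) * of_int (k$j)) = (\<Sum>k\<in>A. \<Sum>i\<in>I. t i * (r i k * of_int (k$j)))"
    by (simp add: sum_distrib_right mult.assoc)
  also have "\<dots> = (\<Sum>i\<in>I. \<Sum>k\<in>A. t i * (r i k * of_int (k$j)))" by (rule sum.swap)
  also have "\<dots> = (\<Sum>i\<in>I. t i * (\<Sum>k\<in>A. r i k * of_int (k$j)))" by (simp add: sum_distrib_left)
  also have "\<dots> = 0" using assms by (simp add: rrel_def)
  finally show "(\<Sum>k\<in>A. (\<Sum>i\<in>I. t i * r i k) * of_int (k$j)) = 0" .
qed

lemma krel_comb:
  fixes e :: "'i \<Rightarrow> 'k::field_char_0"
  assumes "\<forall>i\<in>I. rrel A (r i)"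
  shows "krel A (\<lambda>k. \<Sum>i\<in>I. e i * of_rat (r i k))"
  unfolding krel_def
proof (intro conjI allI)
  have "(\<Sum>k\<in>A. \<Sum>i\<in>I. e i * of_rat (r i k)) = (\<Sum>i\<in>I. e i * of_rat (\<Sum>k\<in>A. r i k))"
    by (subst sum.swap) (simp add: sum_distrib_left of_rat_sum)
  also have "\<dots> = 0" using assms by (simp add: rrel_def)
  finally show "(\<Sum>k\<in>A. \<Sum>i\<in>I. e i * of_rat (r i k)) = 0" .
  fix j
  have "(\<Sum>k\<in>A. (\<Sum>i\<in>I. e i * of_rat (r i k)) * of_int (k$j))
      = (\<Sum>k\<in>A. \<Sum>i\<in>I. e i * of_rat (r i k * of_int (k$j)))"
    by (simp add: sum_distrib_right mult.assoc of_rat_mult)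
  also have "\<dots> = (\<Sum>i\<in>I. \<Sum>k\<in>A. e i * of_rat (r i k * of_int (k$j)))" by (rule sum.swap)
  also have "\<dots> = (\<Sum>i\<in>I. e i * of_rat (\<Sum>k\<in>A. r i k * of_int (k$j)))"
    by (simp add: sum_distrib_left of_rat_sum)
  also have "\<dots> = 0" using assms by (simp add: rrel_def)
  finally show "(\<Sum>k\<in>A. (\<Sum>i\<in>I. e i * of_rat (r i k)) * of_int (k$j)) = 0" .
qed

lemma krel_add: "krel A c \<Longrightarrow> krel A d \<Longrightarrow> krel A (\<lambda>k. c k + d k)"
  by (simp add: krel_def sum.distrib distrib_right)

lemma generic_aux:
  fixes \<rho> :: "'a \<Rightarrow> 'a \<Rightarrow> rat"
  assumes "finite T" "\<forall>i\<in>T. \<rho> i i \<noteq> 0"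
  shows "\<exists>t. \<forall>k\<in>T. (\<Sum>i\<in>T. t i * \<rho> i k) \<noteq> 0"
  using assms
proof (induction T rule: finite_induct)
  case empty then show ?case by simp
next
  case (insert x T)
  then obtain t where t: "\<forall>k\<in>T. (\<Sum>i\<in>T. t i * \<rho> i k) \<noteq> 0" by auto
  define R where "R k = (\<Sum>i\<in>T. t i * \<rho> i k)" for k
  have "finite ((\<lambda>k. - R k / \<rho> x k) ` insert x T)" using insert by simp
  then obtain s where s: "s \<notin> (\<lambda>k. - R k / \<rho> x k) ` insert x T"
    using ex_new_if_finite[OF infinite_UNIV_char_0] by blast
  define t' where "t' = t(x := s)"
  have "\<forall>k\<in>insert x T. (\<Sum>i\<in>insert x T. t' i * \<rho> i k) \<noteq> 0"
  proof
    fix k assume k: "k \<in> insert x T"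
    have "(\<Sum>i\<in>insert x T. t' i * \<rho> i k) = s * \<rho> x k + (\<Sum>i\<in>T. t' i * \<rho> i k)"
      using insert by (simp add: t'_def)
    also have "(\<Sum>i\<in>T. t' i * \<rho> i k) = R k"
      unfolding R_def t'_def using insert by (intro sum.cong) auto
    finally have eq: "(\<Sum>i\<in>insert x T. t' i * \<rho> i k) = s * \<rho> x k + R k" .
    show "(\<Sum>i\<in>insert x T. t' i * \<rho> i k) \<noteq> 0"
    proof (cases "\<rho> x k = 0")
      case True
      then have "k \<noteq> x" using insert by auto
      then have "k \<in> T" using k by auto
      then show ?thesis using eq True t R_def by simp
    next
      case False
      show ?thesis
      proof
        assume "(\<Sum>i\<in>insert x T. t' i * \<rho> i k) = 0"
        then have "s = - R k / \<rho> x k" using eq False by (simp add: field_simps)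
        then show False using s k by blast
      qed
    qed
  qed
  then show ?case by blast
qed

section \<open>Singular implies the no-coloop condition\<close>

definition NC :: "(int^'n) set \<Rightarrow> (int^'n \<Rightarrow> real) \<Rightarrow> real^'n \<Rightarrow> bool" where
  "NC A p q \<longleftrightarrow> (\<forall>l. \<forall>i\<in>Fl A p q (Suc l) - Fl A p q l.
      rv i \<in> affine hull (rv ` (Fl A p q (Suc l) - {i})))"

lemma sigma_in_Fl:
  assumes "finite A"
  shows "sigma A p q \<subseteq> Fl A p q (Suc l)"
proof -
  have "sigma A p q = Fl A p q (Suc 0)" using sigma_argmin[OF assms] by simp
  then show ?thesis using Fl_mono[of "Suc 0" "Suc l" A p q] by simp
qed

lemma of_rat_dotq:
  "(of_rat (dotq \<phi> (qv k - qv f0)) :: 'k::field_char_0)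
     = (\<Sum>j\<in>UNIV. of_rat (\<phi>$j) * (of_int (k$j) - of_int (f0$j)))"
  by (simp add: dotq_def qv_def of_rat_sum of_rat_mult of_rat_diff)

lemma krel_dot:
  fixes c :: "int^'n \<Rightarrow> 'k::field_char_0"
  assumes "krel A c"
  shows "(\<Sum>k\<in>A. c k * of_rat (dotq \<phi> (qv k - qv f0))) = 0"
proof -
  have "(\<Sum>k\<in>A. c k * of_rat (dotq \<phi> (qv k - qv f0)))
     = (\<Sum>j\<in>UNIV. of_rat (\<phi>$j) * ((\<Sum>k\<in>A. c k * of_int (k$j)) - of_int (f0$j) * (\<Sum>k\<in>A. c k)))"
    unfolding of_rat_dotq
    by (simp add: sum_distrib_left sum_distrib_right sum_subtractf right_diff_distrib
        algebra_simps sum.swap[of _ A])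
  also have "\<dots> = 0" using assms by (simp add: krel_def)
  finally show ?thesis .
qed


lemma sing_NC:
  fixes val :: "'k::field_char_0 \<Rightarrow> real" and c :: "int^'n \<Rightarrow> 'k"
  assumes nv: "nonarch_valuation val" and fin: "finite A" and T: "q \<in> trop_hypersurface A p"
    and c: "\<forall>k\<in>A. c k \<noteq> 0 \<and> val (c k) = wv p q k" and kr: "krel A c"
  shows "NC A p q"
  unfolding NC_def
proof (intro allI ballI)
  fix l i assume i: "i \<in> Fl A p q (Suc l) - Fl A p q l"
  define P where "P = Fl A p q (Suc l) - {i}"
  have PA: "P \<subseteq> A" unfolding P_def using Fl_sub[of A p q "Suc l"] by blast
  have finP: "finite P" by (rule finite_subset[OF PA fin])
  have iA: "i \<in> A" using i Fl_sub[of A p q "Suc l"] by blast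
  have "rv i \<in> affine hull (rv ` P)"
  proof (rule ccontr)
    assume nh: "rv i \<notin> affine hull (rv ` P)"
    have "P \<noteq> {}"
    proof
      assume "P = {}"
      then have "sigma A p q \<subseteq> {i}" using sigma_in_Fl[OF fin, of p q l] unfolding P_def by blast
      then have "card (sigma A p q) \<le> card {i}" by (rule card_mono[rotated]) simp
      then show False using T by (simp add: trop_hypersurface_def)
    qed
    then obtain f0 where f0: "f0 \<in> P" by blast
    obtain \<phi> where \<phi>: "\<forall>v\<in>P. dotq \<phi> (qv v - qv f0) = 0" "dotq \<phi> (qv i - qv f0) \<noteq> 0"
      using not_hull_sep[OF finP f0 nh] by blast
    define lf where "lf k = dotq \<phi> (qv k - qv f0)" for k
    have sum0: "(\<Sum>k\<in>A. c k * of_rat (lf k)) = 0" unfolding lf_def by (rule krel_dot[OF kr])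
    have split: "(\<Sum>k\<in>A. c k * of_rat (lf k)) = c i * of_rat (lf i) + (\<Sum>k\<in>A-{i}. c k * of_rat (lf k))"
      using iA fin by (simp add: sum.remove)
    have ci: "c i \<noteq> 0" "val (c i) = wv p q i" using c iA by auto
    have li: "lf i \<noteq> 0" using \<phi>(2) lf_def by simp
    have main1: "c i * of_rat (lf i) \<noteq> 0" using ci li by simp
    have main2: "val (c i * of_rat (lf i)) = wv p q i"
      using nv_mult[OF nv, of "c i" "of_rat (lf i)"] nv_of_rat[OF nv li] ci li by simp
    have rest: "\<forall>k\<in>A-{i}. c k * of_rat (lf k) = 0 \<or> val (c k * of_rat (lf k)) > wv p q i"
    proof
      fix k assume k: "k \<in> A - {i}"
      show "c k * of_rat (lf k) = 0 \<or> val (c k * of_rat (lf k)) > wv p q i"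
      proof (cases "lf k = 0")
        case True then show ?thesis by simp
      next
        case False
        have nk: "rv k \<notin> affine hull (rv ` P)"
        proof
          assume "rv k \<in> affine hull (rv ` P)"
          then have "lf k = 0" using aff_vanish[OF finP \<phi>(1)] by (simp add: lf_def)
          then show False using False by simp
        qed
        have k1: "k \<notin> Fl A p q (Suc l)"
        proof
          assume "k \<in> Fl A p q (Suc l)"
          then have "k \<in> P" using k P_def by blast
          then have "rv k \<in> affine hull (rv ` P)" by (intro hull_inc imageI)
          then show False using nk by simp
        qed
        have k2: "k \<notin> Hs (Fl A p q l)"
        proof
          assume "k \<in> Hs (Fl A p q l)"
          moreover have "Fl A p q l \<subseteq> P" using i P_def by auto
          ultimately have "k \<in> Hs P" using Hs_mono by blast
          then show False using nk by (simp add: Hs_def)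
        qed
        have lt: "wv p q i < wv p q k"
        proof -
          have "i \<in> Fl A p q (Suc l)" "k \<in> A" using i k by auto
          then show ?thesis using factB[of i A p q l k] k1 k2 by simp
        qed
        have ck: "c k \<noteq> 0" "val (c k) = wv p q k" using c k by auto
        have "val (c k * of_rat (lf k)) = wv p q k"
          using nv_mult[OF nv, of "c k" "of_rat (lf k)"] nv_of_rat[OF nv False] ck False by simp
        then show ?thesis using lt by simp
      qed
    qed
    have finD: "finite (A - {i})" using fin by simp
    have "(\<Sum>k\<in>A-{i}. c k * of_rat (lf k)) = 0 \<or> val (\<Sum>k\<in>A-{i}. c k * of_rat (lf k)) > wv p q i"
      by (rule nv_sum_gt[OF nv finD rest])
    then have "c i * of_rat (lf i) + (\<Sum>k\<in>A-{i}. c k * of_rat (lf k)) \<noteq> 0"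
      using nv_dom[OF nv main1 main2] by simp
    then show False using sum0 split by simp
  qed
  then show "rv i \<in> affine hull (rv ` (Fl A p q (Suc l) - {i}))" by (simp add: P_def)
qed


section \<open>No-coloop condition implies singular\<close>

lemma nv_add_gt:
  fixes val :: "'k::field_char_0 \<Rightarrow> real"
  assumes nv: "nonarch_valuation val"
    and "x = 0 \<or> val x > a" "y = 0 \<or> val y > a"
  shows "x + y = 0 \<or> val (x + y) > a"
proof (cases "x = 0 \<or> y = 0 \<or> x + y = 0")
  case True then show ?thesis using assms by auto
next
  case False
  then have "val (x + y) \<ge> min (val x) (val y)" using nv_add[OF nv] by blast
  then show ?thesis using assms False by auto
qed

lemma rho_exists:
  fixes A P :: "(int^'n) set"
  assumes fin: "finite A" and iA: "i \<in> A" and PA: "P \<subseteq> A" and iP: "i \<notin> P"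
    and h: "rv i \<in> affine hull (rv ` P)"
  shows "\<exists>\<rho>. rrel A \<rho> \<and> \<rho> i = 1 \<and> (\<forall>k. \<rho> k \<noteq> 0 \<longrightarrow> k = i \<or> k \<in> P)"
proof -
  have finP: "finite P" by (rule finite_subset[OF PA fin])
  have "P \<noteq> {}" using h by auto
  then obtain \<mu> :: "int^'n \<Rightarrow> rat" where mu1: "sum \<mu> P = 1"
    and mu2: "\<forall>j. (\<Sum>v\<in>P. \<mu> v * of_int (v$j)) = of_int (i$j)"
    using real_to_rat[OF finP _ h] by blast
  define \<rho> where "\<rho> k = (if k = i then 1 else 0) - (if k \<in> P then \<mu> k else 0)" for k
  have AP: "A \<inter> P = P" using PA by blast
  have "sum \<rho> A = (\<Sum>k\<in>A. if k = i then 1 else 0) - (\<Sum>k\<in>A. if k \<in> P then \<mu> k else 0)"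
    unfolding \<rho>_def by (simp add: sum_subtractf)
  also have "\<dots> = 1 - sum \<mu> P" using fin iA by (simp add: sum.inter_restrict[symmetric] AP)
  finally have r1: "sum \<rho> A = 0" using mu1 by simp
  have r2: "\<forall>j. (\<Sum>k\<in>A. \<rho> k * of_int (k$j)) = 0"
  proof
    fix j
    have "(\<Sum>k\<in>A. \<rho> k * of_int (k$j)) = (\<Sum>k\<in>A. if k = i then of_int (k$j) else 0) - (\<Sum>k\<in>A. if k \<in> P then \<mu> k * of_int (k$j) else 0)"
      unfolding \<rho>_def by (simp add: sum_subtractf left_diff_distrib if_distrib[of "\<lambda>x. x * _"] cong: if_cong)
    also have "\<dots> = of_int (i$j) - (\<Sum>k\<in>P. \<mu> k * of_int (k$j))"
      using fin iA by (simp add: sum.inter_restrict[symmetric] AP)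
    also have "\<dots> = 0" using mu2 by simp
    finally show "(\<Sum>k\<in>A. \<rho> k * of_int (k$j)) = 0" .
  qed
  have "rrel A \<rho>" using r1 r2 by (simp add: rrel_def)
  moreover have "\<rho> i = 1" using iP by (simp add: \<rho>_def)
  moreover have "\<forall>k. \<rho> k \<noteq> 0 \<longrightarrow> k = i \<or> k \<in> P" by (simp add: \<rho>_def)
  ultimately show ?thesis by blast
qed

definition Lv :: "(int^'n) set \<Rightarrow> (int^'n \<Rightarrow> real) \<Rightarrow> real^'n \<Rightarrow> int^'n \<Rightarrow> nat" where
  "Lv A p q k = (LEAST l. k \<in> Hs (Fl A p q (Suc l)))"

lemma Lv_props:
  assumes Nt: "A \<subseteq> Hs (Fl A p q Nt)" and k: "k \<in> A"
  shows "Lv A p q k < Nt" "k \<in> Hs (Fl A p q (Suc (Lv A p q k)))" "k \<notin> Hs (Fl A p q (Lv A p q k))"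
proof -
  have "Nt \<noteq> 0" using Nt k by (cases Nt) auto
  then obtain m where m: "Nt = Suc m" by (cases Nt) auto
  have km: "k \<in> Hs (Fl A p q (Suc m))" using Nt k m by blast
  show "k \<in> Hs (Fl A p q (Suc (Lv A p q k)))" unfolding Lv_def by (rule LeastI[of _ m]) (rule km)
  have "Lv A p q k \<le> m" unfolding Lv_def by (rule Least_le) (rule km)
  then show "Lv A p q k < Nt" using m by simp
  show "k \<notin> Hs (Fl A p q (Lv A p q k))"
  proof (cases "Lv A p q k")
    case 0 then show ?thesis by simp
  next
    case (Suc m')
    then have "m' < Lv A p q k" by simp
    then have "\<not> k \<in> Hs (Fl A p q (Suc m'))" unfolding Lv_def by (rule not_less_Least)
    then show ?thesis using Suc by simp
  qed
qed

lemma Lv_G: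
  assumes i: "i \<in> Fl A p q (Suc l) - Fl A p q l"
  shows "Lv A p q i = l"
proof -
  have i1: "i \<in> Hs (Fl A p q (Suc l))" using i Hs_sub by blast
  have le: "Lv A p q i \<le> l" unfolding Lv_def by (rule Least_le) (rule i1)
  have ni: "i \<notin> Hs (Fl A p q l)" using Fl_new[OF i] argmin_sub by blast
  have "i \<in> Hs (Fl A p q (Suc (Lv A p q i)))" unfolding Lv_def by (rule LeastI[of _ l]) (rule i1)
  moreover have "\<not> Lv A p q i < l"
  proof
    assume "Lv A p q i < l"
    then have "Fl A p q (Suc (Lv A p q i)) \<subseteq> Fl A p q l" by (intro Fl_mono) simp
    then have "Hs (Fl A p q (Suc (Lv A p q i))) \<subseteq> Hs (Fl A p q l)" by (rule Hs_mono)
    then show False using ni \<open>i \<in> Hs (Fl A p q (Suc (Lv A p q i)))\<close> by blast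
  qed
  ultimately show ?thesis using le by simp
qed

lemma exists_level:
  assumes "j \<in> Fl A p q N"
  shows "\<exists>l<N. j \<in> Fl A p q (Suc l) - Fl A p q l"
  using assms
proof (induction N)
  case 0 then show ?case by simp
next
  case (Suc N)
  show ?case
  proof (cases "j \<in> Fl A p q N")
    case True
    then obtain l where "l < N" "j \<in> Fl A p q (Suc l) - Fl A p q l" using Suc.IH by blast
    then show ?thesis using less_SucI by blast
  next
    case False
    then show ?thesis using Suc.prems by (intro exI[of _ N]) simp
  qed
qed


lemma NC_sing:
  fixes val :: "'k::field_char_0 \<Rightarrow> real" and A :: "(int^'n) set"
  assumes nv: "nonarch_valuation val" and fin: "finite A" and nc: "NC A p q"
  shows "\<exists>c::int^'n \<Rightarrow> 'k. (\<forall>k\<in>A. c k \<noteq> 0 \<and> val (c k) = wv p q k) \<and> krel A c"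
proof -
  let ?F = "Fl A p q"
  let ?L = "Lv A p q"
  let ?w = "wv p q"
  obtain Nt where Nt: "A \<subseteq> Hs (?F Nt)" using Fl_stab[OF fin] by blast
  have ex_rho: "\<exists>\<rho>. rrel A \<rho> \<and> \<rho> i = 1 \<and> (\<forall>k. \<rho> k \<noteq> 0 \<longrightarrow> k = i \<or> k \<in> ?F (Suc (?L i)))"
    if iA: "i \<in> A" for i
  proof -
    define P where "P = ?F (Suc (?L i)) - {i}"
    have PA: "P \<subseteq> A" unfolding P_def using Fl_sub[of A p q "Suc (?L i)"] by blast
    have hP: "rv i \<in> affine hull (rv ` P)"
    proof (cases "i \<in> ?F (Suc (?L i))")
      case True
      have "i \<notin> ?F (?L i)" using Lv_props(3)[OF Nt iA] Hs_sub by blast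
      then have "i \<in> ?F (Suc (?L i)) - ?F (?L i)" using True by blast
      then show ?thesis using nc unfolding NC_def P_def by blast
    next
      case False
      then have "P = ?F (Suc (?L i))" unfolding P_def by blast
      then show ?thesis using Lv_props(2)[OF Nt iA] by (simp add: Hs_def)
    qed
    obtain \<rho> where "rrel A \<rho>" "\<rho> i = 1" "\<forall>k. \<rho> k \<noteq> 0 \<longrightarrow> k = i \<or> k \<in> P"
      using rho_exists[OF fin iA PA _ hP] unfolding P_def by blast
    then show ?thesis unfolding P_def by blast
  qed
  obtain \<rho> where rho: "\<forall>i\<in>A. rrel A (\<rho> i) \<and> \<rho> i i = 1 \<and> (\<forall>k. \<rho> i k \<noteq> 0 \<longrightarrow> k = i \<or> k \<in> ?F (Suc (?L i)))"
    using bchoice[of A "\<lambda>i r. rrel A r \<and> r i = 1 \<and> (\<forall>k. r k \<noteq> 0 \<longrightarrow> k = i \<or> k \<in> ?F (Suc (?L i)))"] ex_rho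
    by blast
  define G where "G l = ?F (Suc l) - ?F l" for l
  have GA: "G l \<subseteq> A" for l unfolding G_def using Fl_sub[of A p q "Suc l"] by blast
  have finG: "finite (G l)" for l by (rule finite_subset[OF GA fin])
  have ex_t: "\<exists>t. \<forall>k\<in>G l. (\<Sum>i\<in>G l. t i * \<rho> i k) \<noteq> 0" for l
  proof (rule generic_aux[OF finG])
    show "\<forall>i\<in>G l. \<rho> i i \<noteq> 0"
    proof
      fix i assume "i \<in> G l"
      then have "i \<in> A" using GA by blast
      then have "\<rho> i i = 1" using rho by blast
      then show "\<rho> i i \<noteq> 0" by simp
    qed
  qed
  obtain t where t: "\<forall>l. \<forall>k\<in>G l. (\<Sum>i\<in>G l. t l i * \<rho> i k) \<noteq> 0"
  proof -
    have "\<forall>l. \<exists>t. \<forall>k\<in>G l. (\<Sum>i\<in>G l. t i * \<rho> i k) \<noteq> 0" using ex_t by blast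
    then show ?thesis using that by (metis choice)
  qed
  define R where "R l k = (\<Sum>i\<in>G l. t l i * \<rho> i k)" for l k
  have R_rrel: "rrel A (R l)" for l
    unfolding R_def by (rule rrel_comb) (use rho GA in blast)
  have R_supp: "k \<in> ?F (Suc l)" if "R l k \<noteq> 0" for l k
  proof (rule ccontr)
    assume nk: "k \<notin> ?F (Suc l)"
    have "\<forall>i\<in>G l. t l i * \<rho> i k = 0"
    proof
      fix i assume i: "i \<in> G l"
      have "?L i = l" using Lv_G i G_def by blast
      moreover have "k \<noteq> i" using i nk G_def by blast
      ultimately have "\<rho> i k = 0" using rho GA i nk by blast
      then show "t l i * \<rho> i k = 0" by simp
    qed
    then have "R l k = 0" unfolding R_def by (rule sum.neutral)
    then show False using that by simp
  qed
  have R_nz: "R l k \<noteq> 0" if "k \<in> G l" for l k using t that by (simp add: R_def)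
  define gl where "gl l = (SOME g. g \<in> G l)" for l
  define eps where "eps l = (SOME x::'k. x \<noteq> 0 \<and> val x = ?w (gl l))" for l
  define e where "e k = (SOME x::'k. x \<noteq> 0 \<and> val x = ?w k)" for k
  have eps: "eps l \<noteq> 0 \<and> val (eps l) = ?w (gl l)" for l
    unfolding eps_def by (rule someI_ex[OF nv_surj[OF nv]])
  have e: "e k \<noteq> 0 \<and> val (e k) = ?w k" for k
    unfolding e_def by (rule someI_ex[OF nv_surj[OF nv]])
  have gl: "gl l \<in> G l" if "G l \<noteq> {}" for l
    unfolding gl_def using that by (simp add: some_in_eq)
  have Gmin: "G l \<subseteq> argmin_set p q (A - Hs (?F l))" for l
    unfolding G_def using Fl_new by blast
  define Os where "Os = A - ?F Nt"
  have OsA: "Os \<subseteq> A" unfolding Os_def by blast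
  have finOs: "finite Os" by (rule finite_subset[OF OsA fin])
  define c where "c k = (\<Sum>l\<in>{..<Nt}. eps l * of_rat (R l k)) + (\<Sum>ob\<in>Os. e ob * of_rat (\<rho> ob k))" for k
  have kr: "krel A c"
  proof -
    have "krel A (\<lambda>k. \<Sum>l\<in>{..<Nt}. eps l * of_rat (R l k))"
      by (rule krel_comb) (use R_rrel in blast)
    moreover have "krel A (\<lambda>k. \<Sum>ob\<in>Os. e ob * of_rat (\<rho> ob k))"
      by (rule krel_comb) (use rho OsA in blast)
    ultimately show ?thesis unfolding c_def by (rule krel_add)
  qed
  have FNt: "?F (Suc l) \<subseteq> ?F Nt" if "l < Nt" for l using that by (intro Fl_mono) simp
  have vals: "c j \<noteq> 0 \<and> val (c j) = ?w j" if jA: "j \<in> A" for j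
  proof (cases "j \<in> ?F Nt")
    case False
    have s1: "(\<Sum>l\<in>{..<Nt}. eps l * of_rat (R l j)) = 0"
    proof (rule sum.neutral, rule ballI)
      fix l assume "l \<in> {..<Nt}"
      then have "R l j = 0" using R_supp FNt False by blast
      then show "eps l * of_rat (R l j) = 0" by simp
    qed
    have jO: "j \<in> Os" using jA False Os_def by blast
    have s2: "(\<Sum>ob\<in>Os. e ob * of_rat (\<rho> ob j)) = e j * of_rat (\<rho> j j) + (\<Sum>ob\<in>Os-{j}. e ob * of_rat (\<rho> ob j))"
      using finOs jO by (simp add: sum.remove)
    have s3: "(\<Sum>ob\<in>Os-{j}. e ob * of_rat (\<rho> ob j)) = 0"
    proof (rule sum.neutral, rule ballI)
      fix ob assume ob: "ob \<in> Os - {j}"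
      then have oA: "ob \<in> A" using OsA by blast
      have "?F (Suc (?L ob)) \<subseteq> ?F Nt" using FNt Lv_props(1)[OF Nt oA] by blast
      then have "\<rho> ob j = 0" using rho oA ob False by blast
      then show "e ob * of_rat (\<rho> ob j) = 0" by simp
    qed
    have "\<rho> j j = 1" using rho jA by blast
    then have "c j = e j" unfolding c_def using s1 s2 s3 by simp
    then show ?thesis using e by simp
  next
    case True
    obtain l0 where l0: "l0 < Nt" "j \<in> G l0" using exists_level[OF True] G_def by blast
    have Gl0: "G l0 \<noteq> {}" using l0 by blast
    have gl0: "gl l0 \<in> G l0" using gl[OF Gl0] .
    have wj: "?w (gl l0) = ?w j" using Gmin gl0 l0(2) argmin_eqv by blast
    define main where "main = eps l0 * of_rat (R l0 j)"
    have Rj: "R l0 j \<noteq> 0" using R_nz l0 by blast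
    have m1: "main \<noteq> 0" using eps Rj main_def by simp
    have m2: "val main = ?w j"
      using nv_mult[OF nv, of "eps l0" "of_rat (R l0 j)"] nv_of_rat[OF nv Rj] eps[of l0] Rj wj main_def by simp
    define r1 where "r1 = (\<Sum>l\<in>{..<Nt}-{l0}. eps l * of_rat (R l j))"
    define r2 where "r2 = (\<Sum>ob\<in>Os. e ob * of_rat (\<rho> ob j))"
    have cj: "c j = main + (r1 + r2)"
      unfolding c_def main_def r1_def r2_def using l0(1) by (simp add: sum.remove)
    have jF: "j \<in> ?F (Suc l0)" "j \<notin> ?F l0" using l0 G_def by auto
    have t1: "\<forall>l\<in>{..<Nt}-{l0}. eps l * of_rat (R l j) = 0 \<or> val (eps l * of_rat (R l j)) > ?w j"
    proof
      fix l assume l: "l \<in> {..<Nt}-{l0}"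
      show "eps l * of_rat (R l j) = 0 \<or> val (eps l * of_rat (R l j)) > ?w j"
      proof (cases "R l j = 0")
        case True then show ?thesis by simp
      next
        case False
        have jl: "j \<in> ?F (Suc l)" using R_supp False by blast
        have "\<not> l < l0"
        proof
          assume "l < l0"
          then have "?F (Suc l) \<subseteq> ?F l0" by (intro Fl_mono) simp
          then show False using jl jF by blast
        qed
        then have "Suc l0 \<le> l" using l by auto
        then have jl': "j \<in> ?F l" using jF Fl_mono[of "Suc l0" l A p q] by blast
        have "G l \<noteq> {}" using False unfolding R_def by auto
        then have g: "gl l \<in> argmin_set p q (A - Hs (?F l))" using gl Gmin by blast
        then have gA: "gl l \<in> A" "gl l \<notin> Hs (?F l)" using argmin_sub by blast+
        have lt: "?w j < ?w (gl l)" using factA[OF jl' gA] .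
        have "val (eps l * of_rat (R l j)) = ?w (gl l)"
          using nv_mult[OF nv, of "eps l" "of_rat (R l j)"] nv_of_rat[OF nv False] eps[of l] False by simp
        then show ?thesis using lt by simp
      qed
    qed
    have t2: "\<forall>ob\<in>Os. e ob * of_rat (\<rho> ob j) = 0 \<or> val (e ob * of_rat (\<rho> ob j)) > ?w j"
    proof
      fix ob assume ob: "ob \<in> Os"
      show "e ob * of_rat (\<rho> ob j) = 0 \<or> val (e ob * of_rat (\<rho> ob j)) > ?w j"
      proof (cases "\<rho> ob j = 0")
        case True then show ?thesis by simp
      next
        case False
        have oA: "ob \<in> A" using ob OsA by blast
        have jo: "j \<noteq> ob" using ob True Os_def by blast
        then have jin: "j \<in> ?F (Suc (?L ob))" using rho oA False by blast
        have o1: "ob \<notin> Hs (?F (?L ob))" using Lv_props(3)[OF Nt oA] .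
        have "?F (Suc (?L ob)) \<subseteq> ?F Nt" using FNt Lv_props(1)[OF Nt oA] by blast
        then have o2: "ob \<notin> ?F (Suc (?L ob))" using ob Os_def by blast
        have lt: "?w j < ?w ob" using factB[OF jin oA o1 o2] .
        have "val (e ob * of_rat (\<rho> ob j)) = ?w ob"
          using nv_mult[OF nv, of "e ob" "of_rat (\<rho> ob j)"] nv_of_rat[OF nv False] e[of ob] False by simp
        then show ?thesis using lt by simp
      qed
    qed
    have finL: "finite ({..<Nt}-{l0})" by simp
    have "r1 = 0 \<or> val r1 > ?w j" unfolding r1_def by (rule nv_sum_gt[OF nv finL t1])
    moreover have "r2 = 0 \<or> val r2 > ?w j" unfolding r2_def by (rule nv_sum_gt[OF nv finOs t2])
    ultimately have "r1 + r2 = 0 \<or> val (r1 + r2) > ?w j" by (rule nv_add_gt[OF nv])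
    then show ?thesis using nv_dom[OF nv m1 m2] cj by simp
  qed
  show ?thesis using vals kr by blast
qed



section \<open>Relatively open polyhedral cells\<close>

lemma polycell:
  fixes E S :: "((real^'n) \<times> real) set"
  assumes finE: "finite E" and finS: "finite S"
    and x0: "x0 \<in> {x. (\<forall>(a,b)\<in>E. a \<bullet> x = b) \<and> (\<forall>(a,b)\<in>S. a \<bullet> x < b)}"
  shows "polyhedron (closure {x. (\<forall>(a,b)\<in>E. a \<bullet> x = b) \<and> (\<forall>(a,b)\<in>S. a \<bullet> x < b)})"
    and "rel_interior (closure {x. (\<forall>(a,b)\<in>E. a \<bullet> x = b) \<and> (\<forall>(a,b)\<in>S. a \<bullet> x < b)})
         = {x. (\<forall>(a,b)\<in>E. a \<bullet> x = b) \<and> (\<forall>(a,b)\<in>S. a \<bullet> x < b)}"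
proof -
  define X where "X = {x. (\<forall>(a,b)\<in>E. a \<bullet> x = b) \<and> (\<forall>(a,b)\<in>S. a \<bullet> x < b)}"
  define Hh where "Hh = \<Inter>((\<lambda>(a,b). {x. a \<bullet> x = b}) ` E)"
  define T where "T = \<Inter>((\<lambda>(a,b). {x. a \<bullet> x < b}) ` S)"
  define Pc where "Pc = \<Inter>((\<lambda>(a,b). {x. a \<bullet> x = b}) ` E) \<inter> \<Inter>((\<lambda>(a,b). {x. a \<bullet> x \<le> (b::real)}) ` S)"
  have X_eq: "X = Hh \<inter> T" unfolding X_def Hh_def T_def by auto
  have affH: "affine Hh" unfolding Hh_def by (rule affine_Inter) (auto intro: affine_hyperplane)
  have openT: "open T" unfolding T_def using finS by (intro open_Inter) (auto intro: open_halfspace_lt)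
  have convT: "convex T" unfolding T_def by (rule convex_Inter) (auto intro: convex_halfspace_lt)
  have convX: "convex X" unfolding X_eq using affine_imp_convex[OF affH] convT by (rule convex_Int)
  have riX: "rel_interior X = X"
  proof
    show "rel_interior X \<subseteq> X" by (rule rel_interior_subset)
    show "X \<subseteq> rel_interior X"
    proof
      fix x assume x: "x \<in> X"
      have "affine hull X \<subseteq> Hh" by (rule hull_minimal) (use X_eq affH in auto)
      then have "T \<inter> affine hull X \<subseteq> X" using X_eq by blast
      moreover have "x \<in> T \<inter> X" using x X_eq by blast
      ultimately show "x \<in> rel_interior X" unfolding mem_rel_interior using openT by blast
    qed
  qed
  have closedPc: "closed Pc" unfolding Pc_def
    by (intro closed_Int closed_Inter) (auto intro: closed_hyperplane closed_halfspace_le)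
  have XPc: "X \<subseteq> Pc" unfolding X_eq Hh_def T_def Pc_def by force
  have clX: "closure X = Pc"
  proof
    show "closure X \<subseteq> Pc" using closure_minimal[OF XPc closedPc] .
    show "Pc \<subseteq> closure X"
    proof
      fix x assume x: "x \<in> Pc"
      have x0X: "x0 \<in> X" using x0 X_def by simp
      show "x \<in> closure X"
        unfolding closure_approachable
      proof (intro allI impI)
        fix \<epsilon> :: real assume e: "\<epsilon> > 0"
        define n where "n = norm (x0 - x)"
        define t where "t = min (1/2) (\<epsilon> / (2 * (n + 1)))"
        have n0: "n \<ge> 0" unfolding n_def by simp
        have t0: "t > 0" unfolding t_def using e n0 by simp
        have t1: "t \<le> 1/2" unfolding t_def by (rule min.cobounded1)
        define y where "y = x + t *\<^sub>R (x0 - x)"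
        have ya: "a \<bullet> y = (1 - t) * (a \<bullet> x) + t * (a \<bullet> x0)" for a
          unfolding y_def by (simp add: inner_add_right inner_diff_right algebra_simps)
        have "y \<in> X"
          unfolding X_def
        proof (intro CollectI conjI ballI)
          fix ab assume ab: "ab \<in> E"
          obtain a b where abd: "ab = (a,b)" by fastforce
          have "a \<bullet> x = b" using x ab abd unfolding Pc_def by auto
          moreover have "a \<bullet> x0 = b" using x0X ab abd unfolding X_def by auto
          ultimately have "a \<bullet> y = b" using ya[of a] by (simp add: algebra_simps)
          then show "case ab of (a, b) \<Rightarrow> a \<bullet> y = b" using abd by simp
        next
          fix ab assume ab: "ab \<in> S"
          obtain a b where abd: "ab = (a,b)" by fastforce
          have h1: "a \<bullet> x \<le> b" using x ab abd unfolding Pc_def by auto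
          have h2: "a \<bullet> x0 < b" using x0X ab abd unfolding X_def by auto
          have "(1 - t) * (a \<bullet> x) \<le> (1 - t) * b" using h1 t1 by (intro mult_left_mono) auto
          moreover have "t * (a \<bullet> x0) < t * b" using h2 t0 by simp
          ultimately have "a \<bullet> y < b" using ya[of a] by (simp add: algebra_simps)
          then show "case ab of (a, b) \<Rightarrow> a \<bullet> y < b" using abd by simp
        qed
        moreover have "dist y x < \<epsilon>"
        proof -
          have "dist y x = t * n" unfolding y_def n_def dist_norm using t0 by simp
          also have "\<dots> \<le> \<epsilon> / (2 * (n + 1)) * n" using n0 unfolding t_def by (intro mult_right_mono) auto
          also have "\<dots> < \<epsilon>"
          proof -
            have "\<epsilon> / (2 * (n + 1)) * n = \<epsilon> * (n / (2 * (n + 1)))" by simp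
            moreover have "n / (2 * (n + 1)) < 1" using n0 by (simp add: field_simps)
            moreover have "\<epsilon> * (n / (2 * (n + 1))) < \<epsilon> * 1"
              using \<open>n / (2 * (n + 1)) < 1\<close> e by (rule mult_strict_left_mono)
            ultimately show ?thesis by simp
          qed
          finally show ?thesis .
        qed
        ultimately show "\<exists>y\<in>X. dist y x < \<epsilon>" by blast
      qed
    qed
  qed
  have polyPc: "polyhedron Pc" unfolding Pc_def
    using finE finS
    by (intro polyhedron_Int polyhedron_Inter) (auto intro: polyhedron_hyperplane polyhedron_halfspace_le)
  show "polyhedron (closure {x. (\<forall>(a,b)\<in>E. a \<bullet> x = b) \<and> (\<forall>(a,b)\<in>S. a \<bullet> x < b)})"
    using polyPc clX X_def by simp
  show "rel_interior (closure {x. (\<forall>(a,b)\<in>E. a \<bullet> x = b) \<and> (\<forall>(a,b)\<in>S. a \<bullet> x < b)})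
         = {x. (\<forall>(a,b)\<in>E. a \<bullet> x = b) \<and> (\<forall>(a,b)\<in>S. a \<bullet> x < b)}"
    using convex_rel_interior_closure[OF convX] riX X_def by simp
qed



lemma pair_eq: "(rv i - rv k) \<bullet> q = p k - p i \<longleftrightarrow> wv p q i = wv p q k"
  by (auto simp: wv_def inner_diff_left algebra_simps)

lemma pair_lt: "(rv i - rv k) \<bullet> q < p k - p i \<longleftrightarrow> wv p q i < wv p q k"
  by (auto simp: wv_def inner_diff_left algebra_simps)

lemma Ycell:
  fixes A :: "(int^'n) set"
  assumes fin: "finite A" and SS: "SS \<subseteq> Pow A"
  shows "\<exists>E Sx. finite E \<and> finite Sx \<and>
    {q. \<forall>S\<in>SS. argmin_set p q S = argmin_set p q0 S}
      = {x. (\<forall>(a,b)\<in>E. a \<bullet> x = b) \<and> (\<forall>(a,b)\<in>Sx. a \<bullet> x < b)}"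
proof -
  define M where "M S = argmin_set p q0 S" for S
  define PE where "PE = {(i,k). \<exists>S\<in>SS. i \<in> M S \<and> k \<in> M S}"
  define PS where "PS = {(i,k). \<exists>S\<in>SS. i \<in> M S \<and> k \<in> S - M S}"
  define f where "f = (\<lambda>(i,k). (rv i - rv k, p k - p i))"
  have MA: "M S \<subseteq> A" if "S \<in> SS" for S using that SS argmin_sub[of p q0 S] unfolding M_def by blast
  have "PE \<subseteq> A \<times> A" unfolding PE_def using MA by blast
  then have fPE: "finite PE" by (rule finite_subset) (simp add: fin)
  have "PS \<subseteq> A \<times> A" unfolding PS_def using MA SS by blast
  then have fPS: "finite PS" by (rule finite_subset) (simp add: fin)
  have key: "(\<forall>S\<in>SS. argmin_set p q S = M S) \<longleftrightarrow>
     ((\<forall>(a,b)\<in>f ` PE. a \<bullet> q = b) \<and> (\<forall>(a,b)\<in>f ` PS. a \<bullet> q < b))" for q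
  proof -
    have per: "argmin_set p q S = M S \<longleftrightarrow>
       (\<forall>i\<in>M S. \<forall>k\<in>M S. wv p q i = wv p q k) \<and> (\<forall>i\<in>M S. \<forall>k\<in>S-M S. wv p q i < wv p q k)"
      if S: "S \<in> SS" for S
    proof (cases "S = {}")
      case True then show ?thesis by (simp add: M_def)
    next
      case False
      have "S \<subseteq> A" using S SS by blast
      then have finS: "finite S" using fin by (rule finite_subset)
      have "M S \<noteq> {}" unfolding M_def using argmin_nonempty[OF finS False] .
      moreover have "M S \<subseteq> S" unfolding M_def by (rule argmin_sub)
      ultimately show ?thesis by (rule argmin_eq_iff)
    qed
    have fE: "(\<forall>(a,b)\<in>f ` P. a \<bullet> q = b) \<longleftrightarrow> (\<forall>(i,k)\<in>P. wv p q i = wv p q k)" for P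
    proof
      assume h: "\<forall>(a,b)\<in>f ` P. a \<bullet> q = b"
      show "\<forall>(i,k)\<in>P. wv p q i = wv p q k"
      proof (rule ballI, clarify)
        fix i k assume "(i,k) \<in> P"
        then have "f (i,k) \<in> f ` P" by (rule imageI)
        then have "(rv i - rv k) \<bullet> q = p k - p i" using h unfolding f_def by fastforce
        then show "wv p q i = wv p q k" by (simp only: pair_eq)
      qed
    next
      assume h: "\<forall>(i,k)\<in>P. wv p q i = wv p q k"
      show "\<forall>(a,b)\<in>f ` P. a \<bullet> q = b"
      proof (rule ballI)
        fix ab assume "ab \<in> f ` P"
        then obtain i k where ik: "(i,k) \<in> P" "ab = f (i,k)" by auto
        then have "wv p q i = wv p q k" using h by blast
        then show "case ab of (a,b) \<Rightarrow> a \<bullet> q = b" using ik(2) pair_eq[of i k q p] by (simp add: f_def)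
      qed
    qed
    have fS: "(\<forall>(a,b)\<in>f ` P. a \<bullet> q < b) \<longleftrightarrow> (\<forall>(i,k)\<in>P. wv p q i < wv p q k)" for P
    proof
      assume h: "\<forall>(a,b)\<in>f ` P. a \<bullet> q < b"
      show "\<forall>(i,k)\<in>P. wv p q i < wv p q k"
      proof (rule ballI, clarify)
        fix i k assume "(i,k) \<in> P"
        then have "f (i,k) \<in> f ` P" by (rule imageI)
        then have "(rv i - rv k) \<bullet> q < p k - p i" using h unfolding f_def by fastforce
        then show "wv p q i < wv p q k" by (simp only: pair_lt)
      qed
    next
      assume h: "\<forall>(i,k)\<in>P. wv p q i < wv p q k"
      show "\<forall>(a,b)\<in>f ` P. a \<bullet> q < b"
      proof (rule ballI)
        fix ab assume "ab \<in> f ` P"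
        then obtain i k where ik: "(i,k) \<in> P" "ab = f (i,k)" by auto
        then have "wv p q i < wv p q k" using h by blast
        then show "case ab of (a,b) \<Rightarrow> a \<bullet> q < b" using ik(2) pair_lt[of i k q p] by (simp add: f_def)
      qed
    qed
    have "(\<forall>(i,k)\<in>PE. wv p q i = wv p q k) \<longleftrightarrow> (\<forall>S\<in>SS. \<forall>i\<in>M S. \<forall>k\<in>M S. wv p q i = wv p q k)"
      unfolding PE_def by blast
    moreover have "(\<forall>(i,k)\<in>PS. wv p q i < wv p q k) \<longleftrightarrow> (\<forall>S\<in>SS. \<forall>i\<in>M S. \<forall>k\<in>S-M S. wv p q i < wv p q k)"
      unfolding PS_def by blast
    ultimately have c1: "(\<forall>(a,b)\<in>f ` PE. a \<bullet> q = b) \<longleftrightarrow> (\<forall>S\<in>SS. \<forall>i\<in>M S. \<forall>k\<in>M S. wv p q i = wv p q k)"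
      and c2: "(\<forall>(a,b)\<in>f ` PS. a \<bullet> q < b) \<longleftrightarrow> (\<forall>S\<in>SS. \<forall>i\<in>M S. \<forall>k\<in>S-M S. wv p q i < wv p q k)"
      using fE fS by simp_all
    show ?thesis unfolding c1 c2 using per by blast
  qed
  have "{q. \<forall>S\<in>SS. argmin_set p q S = argmin_set p q0 S}
      = {x. (\<forall>(a,b)\<in>f ` PE. a \<bullet> x = b) \<and> (\<forall>(a,b)\<in>f ` PS. a \<bullet> x < b)}"
  proof (rule set_eqI)
    fix q
    show "q \<in> {q. \<forall>S\<in>SS. argmin_set p q S = argmin_set p q0 S} \<longleftrightarrow>
      q \<in> {x. (\<forall>(a,b)\<in>f ` PE. a \<bullet> x = b) \<and> (\<forall>(a,b)\<in>f ` PS. a \<bullet> x < b)}"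
      using key[of q] unfolding M_def by (simp only: mem_Collect_eq)
  qed
  then show ?thesis using fPE fPS by blast
qed



lemma flag_Fl_eq:
  fixes A :: "(int^'n) set"
  assumes fin: "finite A" and h: "flag_seq A p q = flag_seq A p q0"
  shows "Fl A p q l = Fl A p q0 l"
proof (cases l)
  case 0 then show ?thesis by simp
next
  case (Suc m)
  have "flag_seq A p q m = flag_seq A p q0 m" using h by simp
  then show ?thesis using Suc flag_Fl[OF fin, of p q m] flag_Fl[OF fin, of p q0 m] by simp
qed

lemma flag_eq_iff:
  fixes A :: "(int^'n) set"
  assumes fin: "finite A"
  shows "flag_seq A p q = flag_seq A p q0 \<longleftrightarrow>
    (\<forall>l. argmin_set p q (A - Hs (Fl A p q0 l)) = argmin_set p q0 (A - Hs (Fl A p q0 l)))"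
proof
  assume h: "flag_seq A p q = flag_seq A p q0"
  show "\<forall>l. argmin_set p q (A - Hs (Fl A p q0 l)) = argmin_set p q0 (A - Hs (Fl A p q0 l))"
  proof
    fix l
    let ?X = "Fl A p q0 l"
    have e0: "Fl A p q l = ?X" by (rule flag_Fl_eq[OF fin h])
    have e1: "Fl A p q (Suc l) = Fl A p q0 (Suc l)" by (rule flag_Fl_eq[OF fin h])
    then have "?X \<union> argmin_set p q (A - Hs ?X) = ?X \<union> argmin_set p q0 (A - Hs ?X)"
      using e0 by simp
    moreover have "argmin_set p q (A - Hs ?X) \<inter> ?X = {}" by (rule argmin_disj)
    moreover have "argmin_set p q0 (A - Hs ?X) \<inter> ?X = {}" by (rule argmin_disj)
    ultimately show "argmin_set p q (A - Hs ?X) = argmin_set p q0 (A - Hs ?X)" by blast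
  qed
next
  assume h: "\<forall>l. argmin_set p q (A - Hs (Fl A p q0 l)) = argmin_set p q0 (A - Hs (Fl A p q0 l))"
  have FE: "Fl A p q l = Fl A p q0 l" for l
  proof (induction l)
    case 0 then show ?case by simp
  next
    case (Suc l) then show ?case using h by simp
  qed
  show "flag_seq A p q = flag_seq A p q0"
  proof (rule ext)
    fix l show "flag_seq A p q l = flag_seq A p q0 l"
      using flag_Fl[OF fin, of p q l] flag_Fl[OF fin, of p q0 l] FE[of "Suc l"] by simp
  qed
qed

lemma wc_Y:
  fixes A :: "(int^'n) set"
  assumes fin: "finite A" and T: "q0 \<in> trop_hypersurface A p"
  shows "weight_class A p q0 = {q. \<forall>S\<in>range (\<lambda>l. A - Hs (Fl A p q0 l)). argmin_set p q S = argmin_set p q0 S}"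
proof
  show "weight_class A p q0 \<subseteq> {q. \<forall>S\<in>range (\<lambda>l. A - Hs (Fl A p q0 l)). argmin_set p q S = argmin_set p q0 S}"
    unfolding weight_class_def using flag_eq_iff[OF fin] by auto
  show "{q. \<forall>S\<in>range (\<lambda>l. A - Hs (Fl A p q0 l)). argmin_set p q S = argmin_set p q0 S} \<subseteq> weight_class A p q0"
  proof
    fix q assume q: "q \<in> {q. \<forall>S\<in>range (\<lambda>l. A - Hs (Fl A p q0 l)). argmin_set p q S = argmin_set p q0 S}"
    then have h: "\<forall>l. argmin_set p q (A - Hs (Fl A p q0 l)) = argmin_set p q0 (A - Hs (Fl A p q0 l))" by auto
    then have fl: "flag_seq A p q = flag_seq A p q0" using flag_eq_iff[OF fin] by blast
    have "argmin_set p q (A - Hs (Fl A p q0 0)) = argmin_set p q0 (A - Hs (Fl A p q0 0))" using h by blast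
    then have "argmin_set p q A = argmin_set p q0 A" by simp
    then have "sigma A p q = sigma A p q0" using sigma_argmin[OF fin] by simp
    then have "q \<in> trop_hypersurface A p" using T by (simp add: trop_hypersurface_def)
    then show "q \<in> weight_class A p q0" using fl by (simp add: weight_class_def)
  qed
qed

lemma finite_wc:
  fixes A :: "(int^'n) set"
  assumes fin: "finite A"
  shows "finite (weight_classes A p)"
proof -
  define AM where "AM q = restrict (\<lambda>S. argmin_set p q S) (Pow A)" for q
  have AM_in: "AM q \<in> Pi\<^sub>E (Pow A) (\<lambda>_. Pow A)" for q
  proof -
    have "\<forall>S\<in>Pow A. argmin_set p q S \<in> Pow A"
    proof
      fix S assume "S \<in> Pow A"
      then show "argmin_set p q S \<in> Pow A" using argmin_sub[of p q S] by blast
    qed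
    then show ?thesis unfolding AM_def by (simp add: restrict_PiE_iff)
  qed
  have AM_eq: "weight_class A p q = weight_class A p q'" if "AM q = AM q'" for q q'
  proof -
    have "\<forall>S\<subseteq>A. argmin_set p q S = argmin_set p q' S"
    proof (intro allI impI)
      fix S assume "S \<subseteq> A"
      then have "AM q S = argmin_set p q S" "AM q' S = argmin_set p q' S" by (auto simp: AM_def)
      then show "argmin_set p q S = argmin_set p q' S" using that by simp
    qed
    then have FE: "Fl A p q l = Fl A p q' l" for l by (rule Fl_det)
    have "flag_seq A p q = flag_seq A p q'"
    proof (rule ext)
      fix l show "flag_seq A p q l = flag_seq A p q' l"
        using flag_Fl[OF fin, of p q l] flag_Fl[OF fin, of p q' l] FE[of "Suc l"] by simp
    qed
    then show ?thesis by (simp add: weight_class_def)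
  qed
  have "weight_classes A p \<subseteq> (\<lambda>m. weight_class A p (SOME q. AM q = m)) ` Pi\<^sub>E (Pow A) (\<lambda>_. Pow A)"
  proof
    fix C assume "C \<in> weight_classes A p"
    then obtain q where C: "C = weight_class A p q" by (auto simp: weight_classes_def)
    have "AM (SOME q'. AM q' = AM q) = AM q" by (rule someI[of _ q]) simp
    then have "weight_class A p (SOME q'. AM q' = AM q) = C" using AM_eq C by blast
    then show "C \<in> (\<lambda>m. weight_class A p (SOME q. AM q = m)) ` Pi\<^sub>E (Pow A) (\<lambda>_. Pow A)"
      using AM_in[of q] by blast
  qed
  moreover have "finite (Pi\<^sub>E (Pow A) (\<lambda>_. Pow A))" using fin by (intro finite_PiE) auto
  ultimately show ?thesis using finite_subset finite_imageI by metis
qed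

theorem proposition4p2:
  fixes A :: "(int^'n) set" and p :: "int^'n \<Rightarrow> real" and val :: "'k::field_char_0 \<Rightarrow> real"
  assumes "alg_closed TYPE('k)"
    and "nonarch_valuation val"
    and "finite A"
    and "Z_span A = UNIV"
  shows "finite (weight_classes A p) \<and>
         (\<forall>C\<in>weight_classes A p. \<exists>P. polyhedron P \<and> C = rel_interior P) \<and>
         (\<forall>C\<in>weight_classes A p. \<exists>\<sigma>. C \<subseteq> rel_interior (dual_cell A p \<sigma>)) \<and>
         (\<forall>C\<in>weight_classes A p.
           (\<forall>q\<in>C. singular_point val A p q) \<or> (\<forall>q\<in>C. \<not> singular_point val A p q))"
proof -
  note nv = assms(2) and fin = assms(3)
  have c1: "finite (weight_classes A p)" by (rule finite_wc[OF fin])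
  have cell: "\<exists>P. polyhedron P \<and> rel_interior P = {q. \<forall>S\<in>SS. argmin_set p q S = argmin_set p q0 S}
             \<and> P = closure {q. \<forall>S\<in>SS. argmin_set p q S = argmin_set p q0 S}"
    if SS: "SS \<subseteq> Pow A" for SS q0
  proof -
    obtain E Sx where E: "finite E" "finite Sx"
      "{q. \<forall>S\<in>SS. argmin_set p q S = argmin_set p q0 S}
        = {x. (\<forall>(a,b)\<in>E. a \<bullet> x = b) \<and> (\<forall>(a,b)\<in>Sx. a \<bullet> x < b)}"
      using Ycell[OF fin SS, of p q0] by blast
    have "q0 \<in> {q. \<forall>S\<in>SS. argmin_set p q S = argmin_set p q0 S}" by simp
    then have x0: "q0 \<in> {x. (\<forall>(a,b)\<in>E. a \<bullet> x = b) \<and> (\<forall>(a,b)\<in>Sx. a \<bullet> x < b)}"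
      using E(3) by simp
    show ?thesis using polycell[OF E(1,2) x0] E(3) by simp
  qed
  have SSA: "range (\<lambda>l. A - Hs (Fl A p q0 l)) \<subseteq> Pow A" for q0 by blast
  have c2: "\<forall>C\<in>weight_classes A p. \<exists>P. polyhedron P \<and> C = rel_interior P"
  proof
    fix C assume "C \<in> weight_classes A p"
    then obtain q0 where T: "q0 \<in> trop_hypersurface A p" and C: "C = weight_class A p q0"
      by (auto simp: weight_classes_def)
    show "\<exists>P. polyhedron P \<and> C = rel_interior P"
      using cell[OF SSA[of q0], of q0] wc_Y[OF fin T] C by metis
  qed
  have c3: "\<forall>C\<in>weight_classes A p. \<exists>\<sigma>. C \<subseteq> rel_interior (dual_cell A p \<sigma>)"
  proof
    fix C assume "C \<in> weight_classes A p"
    then obtain q0 where T: "q0 \<in> trop_hypersurface A p" and C: "C = weight_class A p q0"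
      by (auto simp: weight_classes_def)
    have D: "{q. sigma A p q = sigma A p q0} = {q. \<forall>S\<in>{A}. argmin_set p q S = argmin_set p q0 S}"
      using sigma_argmin[OF fin] by auto
    obtain P where P: "rel_interior P = {q. \<forall>S\<in>{A}. argmin_set p q S = argmin_set p q0 S}"
      "P = closure {q. \<forall>S\<in>{A}. argmin_set p q S = argmin_set p q0 S}"
      using cell[of "{A}" q0] by blast
    have ri: "rel_interior (dual_cell A p (sigma A p q0)) = {q. sigma A p q = sigma A p q0}"
      unfolding dual_cell_def D using P by simp
    have "C \<subseteq> {q. sigma A p q = sigma A p q0}"
    proof
      fix q assume "q \<in> C"
      then have "flag_seq A p q = flag_seq A p q0" using C by (simp add: weight_class_def)
      then have "flag_seq A p q 0 = flag_seq A p q0 0" by simp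
      then show "q \<in> {q. sigma A p q = sigma A p q0}" by simp
    qed
    then show "\<exists>\<sigma>. C \<subseteq> rel_interior (dual_cell A p \<sigma>)" using ri by blast
  qed
  have c4: "\<forall>C\<in>weight_classes A p.
           (\<forall>q\<in>C. singular_point val A p q) \<or> (\<forall>q\<in>C. \<not> singular_point val A p q)"
  proof
    fix C assume "C \<in> weight_classes A p"
    then obtain q0 where T: "q0 \<in> trop_hypersurface A p" and C: "C = weight_class A p q0"
      by (auto simp: weight_classes_def)
    have key: "singular_point val A p q \<longleftrightarrow> NC A p q0" if q: "q \<in> C" for q
    proof -
      have qT: "q \<in> trop_hypersurface A p" and fl: "flag_seq A p q = flag_seq A p q0"
        using q C by (auto simp: weight_class_def)
      have "Fl A p q = Fl A p q0" using flag_Fl_eq[OF fin fl] by (intro ext)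
      then have NCeq: "NC A p q = NC A p q0" by (simp add: NC_def)
      have "singular_point val A p q \<longleftrightarrow> NC A p q"
      proof
        assume "singular_point val A p q"
        then obtain c :: "int^'n \<Rightarrow> 'k" where "\<forall>k\<in>A. c k \<noteq> 0 \<and> val (c k) = wv p q k" "krel A c"
          using singular_iff[OF nv] by blast
        then show "NC A p q" using sing_NC[OF nv fin qT] by blast
      next
        assume "NC A p q"
        then obtain c :: "int^'n \<Rightarrow> 'k" where "\<forall>k\<in>A. c k \<noteq> 0 \<and> val (c k) = wv p q k" "krel A c"
          using NC_sing[OF nv fin] by blast
        then show "singular_point val A p q" using singular_iff[OF nv] qT by blast
      qed
      then show ?thesis using NCeq by simp
    qed
    show "(\<forall>q\<in>C. singular_point val A p q) \<or> (\<forall>q\<in>C. \<not> singular_point val A p q)"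
      using key by blast
  qed
  show ?thesis using c1 c2 c3 c4 by blast
qed


end
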